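(* Let $a>b>c>0$ and consider the ellipsoid $\mathcal{E}:\ \frac{x^2}{a^2}+\frac{y^2}{b^2}+\frac{z^2}{c^2}=1$. Consider the following curves in $\mathbb{R}^3$ ($t\in[0,2\pi)$): Ellipse 1: $(a\cos t,\, b\sin t,\, 0)$; Ellipse 2: $(a\cos t,\,0,\,c\sin t)$; Ellipse 3: $(0,\,b\cos t,\,c\sin t)$; Astroida 4: $\left(\frac{a^2-b^2}{a}\cos^3 t,\,\frac{a^2-b^2}{b}\sin^3 t,\,0\right)$; Astroida 5: $\left(\frac{a^2-c^2}{a}\cos^3 t,\,0,\,\frac{a^2-c^2}{c}\sin^3 t\right)$; Astroida 6: $\left(0,\,\frac{b^2-c^2}{b}\cos^3 t,\,\frac{b^2-c^2}{c}\sin^3 t\right)$; Ellipse 7: $\left(\frac{a^2-c^2}{a}\cos t,\,\frac{b^2-c^2}{b}\sin t,\,0\right)$; Ellipse 8: $\left(\frac{a^2-b^2}{a}\cos t,\,0,\,\frac{b^2-c^2}{c}\sin t\right)$; Ellipse 9: $\left(0,\,\frac{a^2-b^2}{b}\cos t,\,\frac{a^2-c^2}{c}\sin t\right)$. In what follows, "$(\pm u,\pm v)$-type points" means all four sign combinations. Then: (1) If $a^2\ge 2b^2$, Ellipse 1 and Astroida 4 intersect at the points $(\pm x_0,\pm y_0,0)$, where $x_0=\sqrt{\frac{a^4(a^2-2b^2)^3}{(a^2-b^2)(a^2+b^2)^3}}$, $y_0=\sqrt{\frac{b^4(2a^2-b^2)^3}{(a^2-b^2)(a^2+b^2)^3}}$.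 (2) If $a^2\ge 2c^2$, Ellipse 2 and Astroida 5 intersect at $(\pm x_1,0,\pm z_1)$, where $x_1=\sqrt{\frac{a^4(a^2-2c^2)^3}{(a^2-c^2)(a^2+c^2)^3}}$, $z_1=\sqrt{\frac{c^4(2a^2-c^2)^3}{(a^2-c^2)(a^2+c^2)^3}}$. (3) If $b^2\ge 2c^2$, Ellipse 3 and Astroida 6 intersect at $(0,\pm y_2,\pm z_2)$, where $y_2=\sqrt{\frac{b^4(b^2-2c^2)^3}{(b^2-c^2)(b^2+c^2)^3}}$, $z_2=\sqrt{\frac{c^4(2b^2-c^2)^3}{(b^2-c^2)(b^2+c^2)^3}}$. (4) Ellipse 1 and Ellipse 7 have no real intersection points; the (complex) common points of the conics $\frac{x^2}{a^2}+\frac{y^2}{b^2}=1$ and $\frac{a^2x^2}{(a^2-c^2)^2}+\frac{b^2y^2}{(b^2-c^2)^2}=1$ in the plane $z=0$ are $(\pm x^*,\pm y^*,0)$, where $(x^* )^2=\frac{a^2(a^2-c^2)^2(2b^2-c^2)}{(a^2-b^2)(2a^2b^2-a^2c^2-b^2c^2)}$ and $(y^* )^2=\frac{b^2(b^2-c^2)^2(2a^2-c^2)}{(b^2-a^2)(2a^2b^2-b^2c^2-a^2c^2)}$ (the latter being negative). (5) If $b^2\ge 2c^2$, Ellipse 2 and Ellipse 8 intersect at $(\pm x_3,0,\pm z_3)$, where $x_3=\sqrt{\frac{a^2(a^2-b^2)^2(2c^2-b^2)}{(a^2-c^2)(2a^2c^2-a^2b^2-b^2c^2)}}$, $z_3=\sqrt{\frac{c^2(c^2-b^2)^2(2a^2-b^2)}{(c^2-a^2)(2a^2c^2-a^2b^2-b^2c^2)}}$;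 moreover $x_1\ge x_3$ and $z_1\le z_3$, with equality when $\frac1{a^2}+\frac1{c^2}=\frac3{b^2}$. (6) If $2b^2\ge a^2\ge 2c^2$, Ellipse 3 and Ellipse 9 intersect at $(0,\pm y_4,\pm z_4)$, where $y_4=\sqrt{\frac{b^2(b^2-a^2)^2(2c^2-a^2)}{(b^2-c^2)(2b^2c^2-a^2b^2-a^2c^2)}}$, $z_4=\sqrt{\frac{c^2(c^2-a^2)^2(2b^2-a^2)}{(c^2-b^2)(2b^2c^2-a^2b^2-a^2c^2)}}$. In particular (when also $b^2\ge 2c^2$, so that $y_2,z_2$ are defined), $y_2\ge y_4$ and $z_2\le z_4$ if and only if $2b^4+2c^4-a^2b^2-a^2c^2-2b^2c^2\ge 0$. (7) If $a^2+c^2\ge 2b^2$, Astroida 4 and Ellipse 7 intersect at $(\pm x_5,\pm y_5,0)$, where $x_5=\sqrt{\frac{(a^2-c^2)^3(2b^2-a^2-c^2)^3}{a^2(b^2-a^2)(a^2+b^2-2c^2)^3}}$, $y_5=\sqrt{\frac{(b^2-c^2)^3(2a^2-b^2-c^2)^3}{b^2(a^2-b^2)(a^2+b^2-2c^2)^3}}$. (8) Astroida 5 and Ellipse 8 are tangent to each other at the points $(\pm x_6,0,\pm z_6)$, where $x_6=\sqrt{\frac{(a^2-b^2)^3}{a^2(a^2-c^2)}}$, $z_6=\sqrt{\frac{(b^2-c^2)^3}{c^2(a^2-c^2)}}$. These points divide Astroida 5 and Ellipse 8 into parts which belong to different sheets of the caustic of $\mathcal{E}$. These points lie on, inside, or outside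 $\mathcal{E}$ according as $\frac1{a^2}+\frac1{c^2}=\frac3{b^2}$, $<\frac3{b^2}$, or $>\frac3{b^2}$, respectively. (9) If $a^2+c^2\le 2b^2$, Astroida 6 and Ellipse 9 intersect at $(0,\pm y_7,\pm z_7)$, where $y_7=\sqrt{\frac{(b^2-a^2)^3(2c^2-b^2-a^2)^3}{b^2(c^2-b^2)(b^2+c^2-2a^2)^3}}$, $z_7=\sqrt{\frac{(c^2-a^2)^3(2b^2-c^2-a^2)^3}{c^2(b^2-c^2)(b^2+c^2-2a^2)^3}}$. These points lie on, inside, or outside $\mathcal{E}$ according as $2b^4+2c^4-a^2b^2-a^2c^2-2b^2c^2=0$, $<0$, or $>0$, respectively.
   Context: The caustic (focal surface, centro-surface) of $\mathcal{E}$ consists of two sheets: for each point $P$ of $\mathcal{E}$ with outer normal $\mathbf N=(x/a^2,y/b^2,z/c^2)$ and principal curvatures $k_1\le k_2$ (principal radii $R_i=1/k_i$), the centers of principal curvature are $C_i=P-R_i\,\mathbf N/|\mathbf N|$; the sheet formed by the points $C_1$ (greater radius) and the sheet formed by the points $C_2$ (smaller radius) are the two caustics. Equivalently, the caustic is the set of points $(X,Y,Z)$ for which there is $t$ with $\frac{a^2X^2}{(a^2+t)^2}+\frac{b^2Y^2}{(b^2+t)^2}+\frac{c^2Z^2}{(c^2+t)^2}=1$ and $\frac{a^2X^2}{(a^2+t)^3}+\frac{b^2Y^2}{(b^2+t)^3}+\frac{c^2Z^2}{(c^2+t)^3}=0$. The curves listed are the intersections of $\mathcal{E}$ and of its caustics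 with the coordinate planes. *)

theory Defs
  imports "HOL-Analysis.Analysis"
begin

type_synonym pt3 = "real \<times> real \<times> real"

definition ellq :: "real \<Rightarrow> real \<Rightarrow> real \<Rightarrow> pt3 \<Rightarrow> real" where
  "ellq a b c P = (case P of (x, y, z) \<Rightarrow> x^2/a^2 + y^2/b^2 + z^2/c^2)"

definition ellipsoid :: "real \<Rightarrow> real \<Rightarrow> real \<Rightarrow> pt3 set" where
  "ellipsoid a b c = {P. ellq a b c P = 1}"

definition ell_normal :: "real \<Rightarrow> real \<Rightarrow> real \<Rightarrow> pt3 \<Rightarrow> pt3" where
  "ell_normal a b c P = (case P of (x, y, z) \<Rightarrow> (x/a^2, y/b^2, z/c^2))"

text \<open>Weingarten map (differential of the unit outer normal n = N/|N|) of the
  level surface at P applied to a tangent vector v: the tangential projection of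
  diag(1/a^2,1/b^2,1/c^2) v divided by |N|.\<close>
definition weingarten :: "real \<Rightarrow> real \<Rightarrow> real \<Rightarrow> pt3 \<Rightarrow> pt3 \<Rightarrow> pt3" where
  "weingarten a b c P v =
     (let N = ell_normal a b c P;
          Dv = (case v of (v1, v2, v3) \<Rightarrow> (v1/a^2, v2/b^2, v3/c^2))
      in (1 / norm N) *\<^sub>R (Dv - ((Dv \<bullet> N) / (N \<bullet> N)) *\<^sub>R N))"

definition principal_curvatures :: "real \<Rightarrow> real \<Rightarrow> real \<Rightarrow> pt3 \<Rightarrow> real set" where
  "principal_curvatures a b c P =
     {k. \<exists>v. v \<noteq> 0 \<and> v \<bullet> ell_normal a b c P = 0 \<and> weingarten a b c P v = k *\<^sub>R v}"

definition kappa1 :: "real \<Rightarrow> real \<Rightarrow> real \<Rightarrow> pt3 \<Rightarrow> real" where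
  "kappa1 a b c P = Min (principal_curvatures a b c P)"

definition kappa2 :: "real \<Rightarrow> real \<Rightarrow> real \<Rightarrow> pt3 \<Rightarrow> real" where
  "kappa2 a b c P = Max (principal_curvatures a b c P)"

definition curvature_center :: "real \<Rightarrow> real \<Rightarrow> real \<Rightarrow> pt3 \<Rightarrow> real \<Rightarrow> pt3" where
  "curvature_center a b c P k =
     P - (1 / k) *\<^sub>R ((1 / norm (ell_normal a b c P)) *\<^sub>R ell_normal a b c P)"

definition caustic_sheet1 :: "real \<Rightarrow> real \<Rightarrow> real \<Rightarrow> pt3 set" where
  "caustic_sheet1 a b c = {curvature_center a b c P (kappa1 a b c P) | P. P \<in> ellipsoid a b c}"

definition caustic_sheet2 :: "real \<Rightarrow> real \<Rightarrow> real \<Rightarrow> pt3 set" where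
  "caustic_sheet2 a b c = {curvature_center a b c P (kappa2 a b c P) | P. P \<in> ellipsoid a b c}"

definition curve :: "(real \<Rightarrow> pt3) \<Rightarrow> pt3 set" where
  "curve f = f ` {0..<2*pi}"

definition ellipse1 :: "real \<Rightarrow> real \<Rightarrow> real \<Rightarrow> real \<Rightarrow> pt3" where
  "ellipse1 a b c t = (a * cos t, b * sin t, 0)"
definition ellipse2 :: "real \<Rightarrow> real \<Rightarrow> real \<Rightarrow> real \<Rightarrow> pt3" where
  "ellipse2 a b c t = (a * cos t, 0, c * sin t)"
definition ellipse3 :: "real \<Rightarrow> real \<Rightarrow> real \<Rightarrow> real \<Rightarrow> pt3" where
  "ellipse3 a b c t = (0, b * cos t, c * sin t)"
definition astroida4 :: "real \<Rightarrow> real \<Rightarrow> real \<Rightarrow> real \<Rightarrow> pt3" where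
  "astroida4 a b c t = ((a^2 - b^2)/a * (cos t)^3, (a^2 - b^2)/b * (sin t)^3, 0)"
definition astroida5 :: "real \<Rightarrow> real \<Rightarrow> real \<Rightarrow> real \<Rightarrow> pt3" where
  "astroida5 a b c t = ((a^2 - c^2)/a * (cos t)^3, 0, (a^2 - c^2)/c * (sin t)^3)"
definition astroida6 :: "real \<Rightarrow> real \<Rightarrow> real \<Rightarrow> real \<Rightarrow> pt3" where
  "astroida6 a b c t = (0, (b^2 - c^2)/b * (cos t)^3, (b^2 - c^2)/c * (sin t)^3)"
definition ellipse7 :: "real \<Rightarrow> real \<Rightarrow> real \<Rightarrow> real \<Rightarrow> pt3" where
  "ellipse7 a b c t = ((a^2 - c^2)/a * cos t, (b^2 - c^2)/b * sin t, 0)"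
definition ellipse8 :: "real \<Rightarrow> real \<Rightarrow> real \<Rightarrow> real \<Rightarrow> pt3" where
  "ellipse8 a b c t = ((a^2 - b^2)/a * cos t, 0, (b^2 - c^2)/c * sin t)"
definition ellipse9 :: "real \<Rightarrow> real \<Rightarrow> real \<Rightarrow> real \<Rightarrow> pt3" where
  "ellipse9 a b c t = (0, (a^2 - b^2)/b * cos t, (a^2 - c^2)/c * sin t)"

definition pm_xy :: "real \<Rightarrow> real \<Rightarrow> pt3 set" where
  "pm_xy u v = {(u, v, 0), (u, -v, 0), (-u, v, 0), (-u, -v, 0)}"
definition pm_xz :: "real \<Rightarrow> real \<Rightarrow> pt3 set" where
  "pm_xz u w = {(u, 0, w), (u, 0, -w), (-u, 0, w), (-u, 0, -w)}"
definition pm_yz :: "real \<Rightarrow> real \<Rightarrow> pt3 set" where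
  "pm_yz v w = {(0, v, w), (0, v, -w), (0, -v, w), (0, -v, -w)}"

definition tangent_at :: "(real \<Rightarrow> pt3) \<Rightarrow> (real \<Rightarrow> pt3) \<Rightarrow> pt3 \<Rightarrow> bool" where
  "tangent_at f g p \<longleftrightarrow>
     (\<exists>t s u w. t \<in> {0..<2*pi} \<and> s \<in> {0..<2*pi} \<and> f t = p \<and> g s = p \<and>
        (f has_vector_derivative u) (at t) \<and> (g has_vector_derivative w) (at s) \<and>
        u \<noteq> 0 \<and> w \<noteq> 0 \<and> (\<exists>k. u = k *\<^sub>R w))"

end

theory Submission
  imports Defs
begin
lemma L_ell:
  fixes p q x y :: real
  assumes "p > 0" "q > 0"
  shows "(\<exists>t\<in>{0..<2*pi}. x = p * cos t \<and> y = q * sin t) \<longleftrightarrow> (x/p)^2 + (y/q)^2 = 1"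
proof
  assume "\<exists>t\<in>{0..<2*pi}. x = p * cos t \<and> y = q * sin t"
  then obtain t where "x = p * cos t" "y = q * sin t" by blast
  then show "(x/p)^2 + (y/q)^2 = 1" using assms by simp
next
  assume "(x/p)^2 + (y/q)^2 = 1"
  then obtain t where "0 \<le> t" "t < 2*pi" "x/p = cos t" "y/q = sin t"
    using sincos_total_2pi by metis
  then show "\<exists>t\<in>{0..<2*pi}. x = p * cos t \<and> y = q * sin t" using assms
    by (intro bexI[of _ t]) (auto simp: field_simps)
qed

lemma cube_sq_eq:
  fixes w u :: real
  assumes "(w^2)^3 = u^3" "u \<ge> 0"
  shows "w^2 = u"
  using power_eq_imp_eq_base[OF assms(1)] assms(2) by simp

lemma L_ast:
  fixes al be x y :: real
  assumes "al > 0" "be > 0"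
  shows "(\<exists>t\<in>{0..<2*pi}. x = al * cos t ^ 3 \<and> y = be * sin t ^ 3) \<longleftrightarrow>
         (\<exists>u. 0 \<le> u \<and> u \<le> 1 \<and> x^2 = al^2 * u^3 \<and> y^2 = be^2 * (1-u)^3)"
proof
  assume "\<exists>t\<in>{0..<2*pi}. x = al * cos t ^ 3 \<and> y = be * sin t ^ 3"
  then obtain t where t: "x = al * cos t ^ 3" "y = be * sin t ^ 3" by blast
  have s: "sin t ^ 2 = 1 - cos t ^ 2" by (simp add: sin_squared_eq)
  show "\<exists>u. 0 \<le> u \<and> u \<le> 1 \<and> x^2 = al^2 * u^3 \<and> y^2 = be^2 * (1-u)^3"
  proof (intro exI[of _ "cos t ^ 2"] conjI)
    show "cos t ^ 2 \<le> 1" using sin_cos_squared_add[of t] zero_le_power2[of "sin t"] by linarith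
    show "x^2 = al^2 * (cos t ^ 2)^3" using t by (simp add: power_mult_distrib flip: power_mult)
    have "y^2 = be^2 * (sin t ^ 2)^3" using t by (simp add: power_mult_distrib flip: power_mult)
    then show "y^2 = be^2 * (1 - cos t ^ 2)^3" using s by simp
  qed simp
next
  assume "\<exists>u. 0 \<le> u \<and> u \<le> 1 \<and> x^2 = al^2 * u^3 \<and> y^2 = be^2 * (1-u)^3"
  then obtain u where u: "0 \<le> u" "u \<le> 1" "x^2 = al^2 * u^3" "y^2 = be^2 * (1-u)^3" by blast
  define cx where "cx = root 3 (x/al)"
  define sy where "sy = root 3 (y/be)"
  have cx3: "cx ^ 3 = x / al" unfolding cx_def by (simp add: odd_real_root_pow)
  have sy3: "sy ^ 3 = y / be" unfolding sy_def by (simp add: odd_real_root_pow)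
  have "(cx^2)^3 = u^3"
  proof -
    have "(cx^2)^3 = (cx^3)^2" by (simp flip: power_mult)
    also have "\<dots> = x^2 / al^2" by (simp add: cx3 power_divide)
    also have "\<dots> = u^3" using u(3) assms by simp
    finally show ?thesis .
  qed
  then have c2: "cx^2 = u" using cube_sq_eq u by blast
  have "(sy^2)^3 = (1-u)^3"
  proof -
    have "(sy^2)^3 = (sy^3)^2" by (simp flip: power_mult)
    also have "\<dots> = y^2 / be^2" by (simp add: sy3 power_divide)
    also have "\<dots> = (1-u)^3" using u(4) assms by simp
    finally show ?thesis .
  qed
  then have s2: "sy^2 = 1 - u" using cube_sq_eq u by simp
  have "cx^2 + sy^2 = 1" using c2 s2 by simp
  then obtain t where t: "0 \<le> t" "t < 2*pi" "cx = cos t" "sy = sin t"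
    using sincos_total_2pi by metis
  show "\<exists>t\<in>{0..<2*pi}. x = al * cos t ^ 3 \<and> y = be * sin t ^ 3"
    using t cx3 sy3 assms by (intro bexI[of _ t]) (auto simp: field_simps)
qed

lemma tangent_cubic:
  fixes k1 k2 x t :: real
  assumes "k1 > 0" "k2 > 0" "0 \<le> x" "x \<le> 1" "0 \<le> t" "t \<le> 1" "x \<noteq> t"
  shows "k1*x^3 + k2*(1-x)^3 > k1*t^3 + k2*(1-t)^3 + (3*k1*t^2 - 3*k2*(1-t)^2)*(x-t)"
proof -
  have id: "k1*x^3 + k2*(1-x)^3 - (k1*t^3 + k2*(1-t)^3 + (3*k1*t^2 - 3*k2*(1-t)^2)*(x-t))
        = (x-t)^2 * (k1*(x+2*t) + k2*(3-x-2*t))"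
    by (simp add: algebra_simps power2_eq_square power3_eq_cube)
  have "(x-t)^2 > 0" using assms by simp
  moreover have "k1*(x+2*t) + k2*(3-x-2*t) > 0"
  proof (cases "x + 2*t > 0")
    case True
    then have "k1*(x+2*t) > 0" using assms by simp
    moreover have "k2*(3-x-2*t) \<ge> 0" using assms by simp
    ultimately show ?thesis by linarith
  next
    case False
    then have "k2*(3-x-2*t) > 0" using assms by simp
    moreover have "k1*(x+2*t) \<ge> 0" using assms by simp
    ultimately show ?thesis by linarith
  qed
  ultimately have "(x-t)^2 * (k1*(x+2*t) + k2*(3-x-2*t)) > 0" by simp
  with id show ?thesis by linarith
qed

lemma L_uniq_aux:
  fixes k1 k2 u w :: real
  assumes k: "k1 > 0" "k2 > 0"
    and uv: "0 \<le> u" "u < w" "w \<le> 1"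
    and gu: "k1*u^3 + k2*(1-u)^3 = 1" and gv: "k1*w^3 + k2*(1-w)^3 = 1"
  shows "k1 \<ge> 1 \<and> k2 \<ge> 1"
proof
  let ?d = "\<lambda>t. 3*k1*t^2 - 3*k2*(1-t)^2"
  have "k1*u^3 + k2*(1-u)^3 > k1*w^3 + k2*(1-w)^3 + ?d w*(u-w)"
    using tangent_cubic[OF k, of u w] uv by simp
  then have "?d w * (u - w) < 0" using gu gv by linarith
  then have dv: "?d w > 0" using uv by (simp add: mult_less_0_iff)
  have "k1*1^3 + k2*(1-1)^3 \<ge> k1*w^3 + k2*(1-w)^3 + ?d w*(1-w)"
  proof (cases "w = 1")
    case False
    then show ?thesis using tangent_cubic[OF k, of 1 w] uv by simp
  qed simp
  moreover have "?d w * (1-w) \<ge> 0" using dv uv by simp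
  ultimately show "k1 \<ge> 1" using gv by simp
next
  let ?d = "\<lambda>t. 3*k1*t^2 - 3*k2*(1-t)^2"
  have "k1*w^3 + k2*(1-w)^3 > k1*u^3 + k2*(1-u)^3 + ?d u*(w-u)"
    using tangent_cubic[OF k, of w u] uv by simp
  then have "?d u * (w - u) < 0" using gu gv by linarith
  then have du: "?d u < 0" using uv by (simp add: mult_less_0_iff)
  have "k1*0^3 + k2*(1-0)^3 \<ge> k1*u^3 + k2*(1-u)^3 + ?d u*(0-u)"
  proof (cases "u = 0")
    case False
    then show ?thesis using tangent_cubic[OF k, of 0 u] uv by simp
  qed simp
  moreover have "?d u * (0-u) \<ge> 0"
  proof -
    have "- ?d u \<ge> 0" using du by linarith
    then have "(- ?d u) * u \<ge> 0" using uv by simp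
    then show ?thesis by (simp only: diff_0 mult_minus_right mult_minus_left)
  qed
  ultimately show "k2 \<ge> 1" using gu by simp
qed

lemma L_uniq:
  fixes k1 k2 u w :: real
  assumes k: "k1 > 0" "k2 > 0" "k1 < 1 \<or> k2 < 1"
    and u: "0 \<le> u" "u \<le> 1" and w: "0 \<le> w" "w \<le> 1"
    and gu: "k1*u^3 + k2*(1-u)^3 = 1" and gv: "k1*w^3 + k2*(1-w)^3 = 1"
  shows "u = w"
proof (rule ccontr)
  assume "u \<noteq> w"
  then have "u < w \<or> w < u" by linarith
  then show False
  proof
    assume "u < w" then show False using L_uniq_aux[OF k(1,2) u(1) _ w(2) gu gv] k(3) by linarith
  next
    assume "w < u" then show False using L_uniq_aux[OF k(1,2) w(1) _ u(2) gv gu] k(3) by linarith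
  qed
qed

lemma L_int:
  fixes al be p q u0 x y :: real
  assumes pos: "al > 0" "be > 0" "p > 0" "q > 0"
    and u0: "0 \<le> u0" "u0 \<le> 1" "al^2/p^2 * u0^3 + be^2/q^2 * (1-u0)^3 = 1"
    and uniq: "\<And>u. 0 \<le> u \<Longrightarrow> u \<le> 1 \<Longrightarrow> al^2/p^2 * u^3 + be^2/q^2 * (1-u)^3 = 1 \<Longrightarrow> u = u0"
  shows "((\<exists>t\<in>{0..<2*pi}. x = p * cos t \<and> y = q * sin t) \<and>
          (\<exists>t\<in>{0..<2*pi}. x = al * cos t ^ 3 \<and> y = be * sin t ^ 3)) \<longleftrightarrow>
         ((x = sqrt (al^2*u0^3) \<or> x = - sqrt (al^2*u0^3)) \<and>
          (y = sqrt (be^2*(1-u0)^3) \<or> y = - sqrt (be^2*(1-u0)^3)))"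
proof -
  have nn1: "al^2*u0^3 \<ge> 0" using u0 by simp
  have nn2: "be^2*(1-u0)^3 \<ge> 0" using u0 by simp
  have key: "(x/p)^2 + (y/q)^2 = 1 \<and> (\<exists>u. 0 \<le> u \<and> u \<le> 1 \<and> x^2 = al^2 * u^3 \<and> y^2 = be^2 * (1-u)^3)
     \<longleftrightarrow> x^2 = al^2*u0^3 \<and> y^2 = be^2*(1-u0)^3"
  proof
    assume h: "(x/p)^2 + (y/q)^2 = 1 \<and> (\<exists>u. 0 \<le> u \<and> u \<le> 1 \<and> x^2 = al^2 * u^3 \<and> y^2 = be^2 * (1-u)^3)"
    then obtain u where u: "0 \<le> u" "u \<le> 1" "x^2 = al^2 * u^3" "y^2 = be^2 * (1-u)^3" by blast
    have "al^2/p^2 * u^3 + be^2/q^2 * (1-u)^3 = 1"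
      using h u by (simp add: power_divide)
    then have "u = u0" using uniq u by blast
    then show "x^2 = al^2*u0^3 \<and> y^2 = be^2*(1-u0)^3" using u by simp
  next
    assume h: "x^2 = al^2*u0^3 \<and> y^2 = be^2*(1-u0)^3"
    then have "(x/p)^2 + (y/q)^2 = 1" using u0(3) by (simp add: power_divide)
    then show "(x/p)^2 + (y/q)^2 = 1 \<and> (\<exists>u. 0 \<le> u \<and> u \<le> 1 \<and> x^2 = al^2 * u^3 \<and> y^2 = be^2 * (1-u)^3)"
      using h u0 by blast
  qed
  have sq: "\<And>z w::real. w \<ge> 0 \<Longrightarrow> z^2 = w \<longleftrightarrow> (z = sqrt w \<or> z = - sqrt w)"
    by (metis power2_eq_iff real_sqrt_pow2)
  show ?thesis
    unfolding L_ell[OF pos(3,4)] L_ast[OF pos(1,2)] key sq[OF nn1] sq[OF nn2] ..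
qed

lemma lin2:
  fixes m11 m12 m21 m22 X Y :: "'a::field"
  assumes "m11*m22 - m12*m21 \<noteq> 0"
  shows "(m11*X + m12*Y = 1 \<and> m21*X + m22*Y = 1) \<longleftrightarrow>
         (X = (m22 - m12)/(m11*m22 - m12*m21) \<and> Y = (m11 - m21)/(m11*m22 - m12*m21))"
proof
  assume h: "m11*X + m12*Y = 1 \<and> m21*X + m22*Y = 1"
  have "X*(m11*m22 - m12*m21) = m22*(m11*X + m12*Y) - m12*(m21*X + m22*Y)" by (simp add: algebra_simps)
  also have "\<dots> = m22 - m12" using h by simp
  finally have e1: "X*(m11*m22 - m12*m21) = m22 - m12" .
  have "Y*(m11*m22 - m12*m21) = m11*(m21*X + m22*Y) - m21*(m11*X + m12*Y)" by (simp add: algebra_simps)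
  also have "\<dots> = m11 - m21" using h by simp
  finally have e2: "Y*(m11*m22 - m12*m21) = m11 - m21" .
  show "X = (m22 - m12)/(m11*m22 - m12*m21) \<and> Y = (m11 - m21)/(m11*m22 - m12*m21)"
    using e1 e2 assms by (simp add: eq_divide_eq)
next
  assume h: "X = (m22 - m12)/(m11*m22 - m12*m21) \<and> Y = (m11 - m21)/(m11*m22 - m12*m21)"
  let ?D = "m11*m22 - m12*m21"
  have "m11*X + m12*Y = (m11*(m22-m12) + m12*(m11-m21))/?D" using h by (simp add: add_divide_distrib)
  also have "\<dots> = ?D/?D" by (simp add: algebra_simps)
  also have "\<dots> = 1" using assms by simp
  finally have 1: "m11*X + m12*Y = 1" .
  have "m21*X + m22*Y = (m21*(m22-m12) + m22*(m11-m21))/?D" using h by (simp add: add_divide_distrib)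
  also have "\<dots> = ?D/?D" by (simp add: algebra_simps)
  also have "\<dots> = 1" using assms by simp
  finally have 2: "m21*X + m22*Y = 1" .
  show "m11*X + m12*Y = 1 \<and> m21*X + m22*Y = 1" using 1 2 by simp
qed

lemma mem_curve_xy: "(x,y,z) \<in> curve (\<lambda>t. (f t, g t, 0)) \<longleftrightarrow> z = 0 \<and> (\<exists>t\<in>{0..<2*pi}. x = f t \<and> y = g t)"
  by (auto simp: curve_def image_iff)
lemma mem_curve_xz: "(x,y,z) \<in> curve (\<lambda>t. (f t, 0, g t)) \<longleftrightarrow> y = 0 \<and> (\<exists>t\<in>{0..<2*pi}. x = f t \<and> z = g t)"
  by (auto simp: curve_def image_iff)
lemma mem_curve_yz: "(x,y,z) \<in> curve (\<lambda>t. (0, f t, g t)) \<longleftrightarrow> x = 0 \<and> (\<exists>t\<in>{0..<2*pi}. y = f t \<and> z = g t)"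
  by (auto simp: curve_def image_iff)
lemma mem_pm_xy: "(x,y,z) \<in> pm_xy u w \<longleftrightarrow> z = 0 \<and> (x = u \<or> x = -u) \<and> (y = w \<or> y = -w)"
  by (auto simp: pm_xy_def)
lemma mem_pm_xz: "(x,y,z) \<in> pm_xz u w \<longleftrightarrow> y = 0 \<and> (x = u \<or> x = -u) \<and> (z = w \<or> z = -w)"
  by (auto simp: pm_xz_def)
lemma mem_pm_yz: "(x,y,z) \<in> pm_yz u w \<longleftrightarrow> x = 0 \<and> (y = u \<or> y = -u) \<and> (z = w \<or> z = -w)"
  by (auto simp: pm_yz_def)

lemma lift_xy:
  assumes "\<And>x y. ((\<exists>t\<in>{0..<2*pi}. x = f1 t \<and> y = g1 t) \<and> (\<exists>t\<in>{0..<2*pi}. x = f2 t \<and> y = g2 t))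
                 \<longleftrightarrow> ((x = u \<or> x = -u) \<and> (y = w \<or> y = -w))"
  shows "curve (\<lambda>t. (f1 t, g1 t, 0)) \<inter> curve (\<lambda>t. (f2 t, g2 t, 0)) = pm_xy u w"
proof (rule set_eqI)
  fix P :: pt3
  obtain x y z where P: "P = (x,y,z)" by (cases P) auto
  show "P \<in> curve (\<lambda>t. (f1 t, g1 t, 0)) \<inter> curve (\<lambda>t. (f2 t, g2 t, 0)) \<longleftrightarrow> P \<in> pm_xy u w"
    unfolding P Int_iff mem_curve_xy mem_pm_xy using assms[of x y] by blast
qed
lemma lift_xz:
  assumes "\<And>x y. ((\<exists>t\<in>{0..<2*pi}. x = f1 t \<and> y = g1 t) \<and> (\<exists>t\<in>{0..<2*pi}. x = f2 t \<and> y = g2 t))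
                 \<longleftrightarrow> ((x = u \<or> x = -u) \<and> (y = w \<or> y = -w))"
  shows "curve (\<lambda>t. (f1 t, 0, g1 t)) \<inter> curve (\<lambda>t. (f2 t, 0, g2 t)) = pm_xz u w"
proof (rule set_eqI)
  fix P :: pt3
  obtain x y z where P: "P = (x,y,z)" by (cases P) auto
  show "P \<in> curve (\<lambda>t. (f1 t, 0, g1 t)) \<inter> curve (\<lambda>t. (f2 t, 0, g2 t)) \<longleftrightarrow> P \<in> pm_xz u w"
    unfolding P Int_iff mem_curve_xz mem_pm_xz using assms[of x z] by blast
qed
lemma lift_yz:
  assumes "\<And>x y. ((\<exists>t\<in>{0..<2*pi}. x = f1 t \<and> y = g1 t) \<and> (\<exists>t\<in>{0..<2*pi}. x = f2 t \<and> y = g2 t))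
                 \<longleftrightarrow> ((x = u \<or> x = -u) \<and> (y = w \<or> y = -w))"
  shows "curve (\<lambda>t. (0, f1 t, g1 t)) \<inter> curve (\<lambda>t. (0, f2 t, g2 t)) = pm_yz u w"
proof (rule set_eqI)
  fix P :: pt3
  obtain x y z where P: "P = (x,y,z)" by (cases P) auto
  show "P \<in> curve (\<lambda>t. (0, f1 t, g1 t)) \<inter> curve (\<lambda>t. (0, f2 t, g2 t)) \<longleftrightarrow> P \<in> pm_yz u w"
    unfolding P Int_iff mem_curve_yz mem_pm_yz using assms[of y z] by blast
qed

lemma c123_arith:
  fixes A B :: real
  assumes B: "B > 0" and AB: "A \<ge> 2*B"
  defines "u0 \<equiv> A*(A-2*B)/((A-B)*(A+B))"
  shows "0 \<le> u0" "u0 \<le> 1" "(A-B)^2/A^2 * u0^3 + (A-B)^2/B^2*(1-u0)^3 = 1"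
    "(A-B)^2/A * u0^3 = A^2*(A-2*B)^3/((A-B)*(A+B)^3)"
    "(A-B)^2/B * (1-u0)^3 = B^2*(2*A-B)^3/((A-B)*(A+B)^3)"
proof -
  have p1: "A - B > 0" "A + B > 0" "A > 0" "A - 2*B \<ge> 0" "2*A - B > 0" using assms by auto
  have d: "(A-B)*(A+B) > 0" using p1 by simp
  have "1 - u0 = ((A-B)*(A+B) - A*(A-2*B))/((A-B)*(A+B))" unfolding u0_def using d p1 by (simp add: diff_divide_distrib)
  also have "(A-B)*(A+B) - A*(A-2*B) = B*(2*A-B)" by (simp add: algebra_simps)
  finally have om: "1 - u0 = B*(2*A-B)/((A-B)*(A+B))" .
  show "0 \<le> u0" unfolding u0_def using p1 by simp
  have "1 - u0 \<ge> 0" unfolding om using p1 B by simp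
  then show "u0 \<le> 1" by simp
  have u3: "u0^3 = A^3*(A-2*B)^3/((A-B)^3*(A+B)^3)" unfolding u0_def by (simp add: power_divide power_mult_distrib)
  have v3: "(1-u0)^3 = B^3*(2*A-B)^3/((A-B)^3*(A+B)^3)" unfolding om by (simp add: power_divide power_mult_distrib)
  have poly: "A*(A-2*B)^3 + B*(2*A-B)^3 = (A-B)*(A+B)^3"
    by (simp add: algebra_simps power3_eq_cube)
  have ne: "A \<noteq> 0" "B \<noteq> 0" "A \<noteq> B" "A + B \<noteq> 0" using p1 B by auto
  have t1: "(A-B)^2/A^2 * u0^3 = A*(A-2*B)^3/((A-B)*(A+B)^3)"
    unfolding u3 using ne by (simp add: field_simps) (simp add: algebra_simps power2_eq_square power3_eq_cube)
  have t2: "(A-B)^2/B^2 * (1-u0)^3 = B*(2*A-B)^3/((A-B)*(A+B)^3)"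
    unfolding v3 using ne by (simp add: field_simps) (simp add: algebra_simps power2_eq_square power3_eq_cube)
  have "(A-B)^2/A^2 * u0^3 + (A-B)^2/B^2*(1-u0)^3 = (A*(A-2*B)^3 + B*(2*A-B)^3)/((A-B)*(A+B)^3)"
    unfolding t1 t2 by (simp add: add_divide_distrib)
  also have "\<dots> = 1" unfolding poly using ne by simp
  finally show "(A-B)^2/A^2 * u0^3 + (A-B)^2/B^2*(1-u0)^3 = 1" .
  show "(A-B)^2/A * u0^3 = A^2*(A-2*B)^3/((A-B)*(A+B)^3)"
    unfolding u3 using ne by (simp add: field_simps) (simp add: algebra_simps power2_eq_square power3_eq_cube)
  show "(A-B)^2/B * (1-u0)^3 = B^2*(2*A-B)^3/((A-B)*(A+B)^3)"
    unfolding v3 using ne by (simp add: field_simps) (simp add: algebra_simps power2_eq_square power3_eq_cube)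
qed

lemma c123:
  fixes a b x y :: real
  assumes ab: "a > b" "b > 0" "a^2 \<ge> 2*b^2"
  shows "((\<exists>t\<in>{0..<2*pi}. x = a*cos t \<and> y = b* sin t) \<and>
          (\<exists>t\<in>{0..<2*pi}. x = (a^2-b^2)/a * cos t ^ 3 \<and> y = (a^2-b^2)/b * sin t ^ 3)) \<longleftrightarrow>
         ((x = sqrt (a^4*(a^2 - 2*b^2)^3 / ((a^2 - b^2)*(a^2 + b^2)^3)) \<or>
           x = - sqrt (a^4*(a^2 - 2*b^2)^3 / ((a^2 - b^2)*(a^2 + b^2)^3))) \<and>
          (y = sqrt (b^4*(2*a^2 - b^2)^3 / ((a^2 - b^2)*(a^2 + b^2)^3)) \<or>
           y = - sqrt (b^4*(2*a^2 - b^2)^3 / ((a^2 - b^2)*(a^2 + b^2)^3))))"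
proof -
  define A where "A = a^2"
  define B where "B = b^2"
  have B0: "B > 0" unfolding B_def using ab by simp
  have AB: "A \<ge> 2*B" unfolding A_def B_def using ab by simp
  have a4: "a^4 = A^2" "b^4 = B^2" unfolding A_def B_def by simp_all
  have AgtB: "A > B" unfolding A_def B_def using ab by (simp add: power_strict_mono)
  define u0 where "u0 = A*(A-2*B)/((A-B)*(A+B))"
  note ar = c123_arith[OF B0 AB, folded u0_def]
  have apos: "a > 0" using ab by simp
  have al: "(a^2-b^2)/a > 0" "(a^2-b^2)/b > 0" using AgtB ab apos unfolding A_def B_def by simp_all
  have k1: "((a^2-b^2)/a)^2/a^2 = (A-B)^2/A^2" unfolding A_def B_def by (simp add: power_divide flip: power_mult)
  have k2: "((a^2-b^2)/b)^2/b^2 = (A-B)^2/B^2" unfolding A_def B_def by (simp add: power_divide flip: power_mult)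
  have s1: "((a^2-b^2)/a)^2 * u0^3 = a^4*(a^2 - 2*b^2)^3 / ((a^2 - b^2)*(a^2 + b^2)^3)"
    using ar(4) unfolding a4 by (simp add: A_def B_def power_divide)
  have s2: "((a^2-b^2)/b)^2 * (1-u0)^3 = b^4*(2*a^2 - b^2)^3 / ((a^2 - b^2)*(a^2 + b^2)^3)"
    using ar(5) unfolding a4 by (simp add: A_def B_def power_divide)
  have kk: "(A-B)^2/A^2 > 0" "(A-B)^2/B^2 > 0" "(A-B)^2/A^2 < 1 \<or> (A-B)^2/B^2 < 1"
  proof -
    show "(A-B)^2/A^2 > 0" "(A-B)^2/B^2 > 0" using AgtB B0 by auto
    have "(A-B)^2 < A^2" using AgtB B0 by (intro power_strict_mono) auto
    then show "(A-B)^2/A^2 < 1 \<or> (A-B)^2/B^2 < 1" using AgtB B0 by simp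
  qed
  show ?thesis
    unfolding s1[symmetric] s2[symmetric]
  proof (rule L_int[OF al apos ab(2)])
    show "0 \<le> u0" "u0 \<le> 1" using ar by simp_all
    show "((a^2-b^2)/a)^2/a^2 * u0^3 + ((a^2-b^2)/b)^2/b^2 * (1-u0)^3 = 1" unfolding k1 k2 by (rule ar(3))
    fix u assume u: "0 \<le> u" "u \<le> 1" "((a^2-b^2)/a)^2/a^2 * u^3 + ((a^2-b^2)/b)^2/b^2 * (1-u)^3 = 1"
    show "u = u0"
      by (rule L_uniq[OF kk u(1,2)]) (use u ar in \<open>simp_all add: k1 k2\<close>)
  qed
qed

lemma id79: "(A-C)*(A+C-2*B)^3 + (B-C)*(2*A-B-C)^3 = (A-B)*(A+B-2*C)^3" for A B C :: real
  by (simp add: algebra_simps power2_eq_square power3_eq_cube)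

lemma G1: "P \<noteq> 0 \<Longrightarrow> Q \<noteq> 0 \<Longrightarrow> S \<noteq> 0 \<Longrightarrow> P^2/Q^2 * (Q^3*R^3/(P^3*S^3)) = Q*R^3/(P*S^3)" for P Q R S :: real
  by (simp add: field_simps power2_eq_square power3_eq_cube)
lemma G2: "P \<noteq> 0 \<Longrightarrow> A \<noteq> 0 \<Longrightarrow> S \<noteq> 0 \<Longrightarrow> P^2/A * (Q^3*R^3/(P^3*S^3)) = Q^3*R^3/(A*P*S^3)" for P Q R S A :: real
  by (simp add: field_simps power2_eq_square power3_eq_cube)
lemma flip3: "(-R)^3/(A*(-P)*S) = R^3/(A*P*S)" for R A P S :: real
  by (simp add: power3_eq_cube)

lemma c7:
  fixes a b c x y :: real
  assumes abc: "a > b" "b > c" "c > 0" "a^2 + c^2 \<ge> 2*b^2"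
  shows "((\<exists>t\<in>{0..<2*pi}. x = (a^2 - c^2)/a * cos t \<and> y = (b^2 - c^2)/b * sin t) \<and>
          (\<exists>t\<in>{0..<2*pi}. x = (a^2-b^2)/a * cos t ^ 3 \<and> y = (a^2-b^2)/b * sin t ^ 3)) \<longleftrightarrow>
         ((x = sqrt ((a^2 - c^2)^3*(2*b^2 - a^2 - c^2)^3 / (a^2*(b^2 - a^2)*(a^2 + b^2 - 2*c^2)^3)) \<or>
           x = - sqrt ((a^2 - c^2)^3*(2*b^2 - a^2 - c^2)^3 / (a^2*(b^2 - a^2)*(a^2 + b^2 - 2*c^2)^3))) \<and>
          (y = sqrt ((b^2 - c^2)^3*(2*a^2 - b^2 - c^2)^3 / (b^2*(a^2 - b^2)*(a^2 + b^2 - 2*c^2)^3)) \<or>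
           y = - sqrt ((b^2 - c^2)^3*(2*a^2 - b^2 - c^2)^3 / (b^2*(a^2 - b^2)*(a^2 + b^2 - 2*c^2)^3))))"
proof -
  define A where "A = a^2"
  define B where "B = b^2"
  define C where "C = c^2"
  have pos: "a > 0" "b > 0" using abc by auto
  have C0: "C > 0" unfolding C_def using abc by simp
  have BC: "B > C" unfolding B_def C_def using abc by (simp add: power_strict_mono)
  have AB: "A > B" unfolding A_def B_def using abc by (simp add: power_strict_mono)
  have ACB: "A + C \<ge> 2*B" unfolding A_def B_def C_def using abc by simp
  have ne: "A \<noteq> 0" "B \<noteq> 0" "C \<noteq> 0" "A \<noteq> B" "B \<noteq> A" "A + B - 2*C \<noteq> 0" "A - C \<noteq> 0" "B - C \<noteq> 0" "A-B \<noteq> 0" "A + B \<noteq> 2*C" "A \<noteq> C" "B \<noteq> C"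
    using AB BC C0 by auto
  define u0 where "u0 = (A-C)*(A+C-2*B)/((A-B)*(A+B-2*C))"
  have d: "(A-B)*(A+B-2*C) > 0" using AB BC C0 by simp
  have "1 - u0 = ((A-B)*(A+B-2*C) - (A-C)*(A+C-2*B))/((A-B)*(A+B-2*C))"
    unfolding u0_def using d ne by (simp add: diff_divide_distrib)
  also have "(A-B)*(A+B-2*C) - (A-C)*(A+C-2*B) = (B-C)*(2*A-B-C)" by (simp add: algebra_simps)
  finally have om: "1 - u0 = (B-C)*(2*A-B-C)/((A-B)*(A+B-2*C))" .
  have u0: "0 \<le> u0" "u0 \<le> 1"
  proof -
    show "0 \<le> u0" unfolding u0_def using d AB BC ACB by simp
    have "1 - u0 \<ge> 0" unfolding om using d AB BC by simp
    then show "u0 \<le> 1" by simp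
  qed
  have u3: "u0^3 = (A-C)^3*(A+C-2*B)^3/((A-B)^3*(A+B-2*C)^3)" unfolding u0_def by (simp add: power_divide power_mult_distrib)
  have v3: "(1-u0)^3 = (B-C)^3*(2*A-B-C)^3/((A-B)^3*(A+B-2*C)^3)" unfolding om by (simp add: power_divide power_mult_distrib)
  have k1: "((a^2-b^2)/a)^2/((a^2 - c^2)/a)^2 = (A-B)^2/(A-C)^2" unfolding A_def B_def C_def using pos by (simp add: power_divide)
  have k2: "((a^2-b^2)/b)^2/((b^2 - c^2)/b)^2 = (A-B)^2/(B-C)^2" unfolding A_def B_def C_def using pos by (simp add: power_divide)
  have t1: "(A-B)^2/(A-C)^2 * u0^3 = (A-C)*(A+C-2*B)^3/((A-B)*(A+B-2*C)^3)"
    unfolding u3 using ne by (intro G1) auto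
  have t2: "(A-B)^2/(B-C)^2 * (1-u0)^3 = (B-C)*(2*A-B-C)^3/((A-B)*(A+B-2*C)^3)"
    unfolding v3 using ne by (intro G1) auto
  have g: "(A-B)^2/(A-C)^2 * u0^3 + (A-B)^2/(B-C)^2 * (1-u0)^3 = 1"
    unfolding t1 t2 add_divide_distrib[symmetric] id79 using ne by simp
  have s1: "((a^2-b^2)/a)^2 * u0^3 = (a^2 - c^2)^3*(2*b^2 - a^2 - c^2)^3 / (a^2*(b^2 - a^2)*(a^2 + b^2 - 2*c^2)^3)"
  proof -
    have "((a^2-b^2)/a)^2 = (A-B)^2/A" unfolding A_def B_def by (simp add: power_divide)
    moreover have "(A-B)^2/A * u0^3 = (A-C)^3*(2*B-A-C)^3/(A*(B-A)*(A+B-2*C)^3)"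
    proof -
      have "(A-B)^2/A * u0^3 = (A-C)^3*(A+C-2*B)^3/(A*(A-B)*(A+B-2*C)^3)"
        unfolding u3 using ne by (intro G2) auto
      also have "\<dots> = (A-C)^3*((-(A+C-2*B))^3/(A*(-(A-B))*(A+B-2*C)^3))"
        unfolding flip3 by simp
      also have "\<dots> = (A-C)^3*(2*B-A-C)^3/(A*(B-A)*(A+B-2*C)^3)"
        by (simp add: algebra_simps)
      finally show ?thesis .
    qed
    ultimately show ?thesis unfolding A_def B_def C_def by simp
  qed
  have s2: "((a^2-b^2)/b)^2 * (1-u0)^3 = (b^2 - c^2)^3*(2*a^2 - b^2 - c^2)^3 / (b^2*(a^2 - b^2)*(a^2 + b^2 - 2*c^2)^3)"
  proof -
    have "((a^2-b^2)/b)^2 = (A-B)^2/B" unfolding A_def B_def by (simp add: power_divide)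
    moreover have "(A-B)^2/B * (1-u0)^3 = (B-C)^3*(2*A-B-C)^3/(B*(A-B)*(A+B-2*C)^3)"
      unfolding v3 using ne by (intro G2) auto
    ultimately show ?thesis unfolding A_def B_def C_def by simp
  qed
  have kk: "(A-B)^2/(A-C)^2 > 0" "(A-B)^2/(B-C)^2 > 0" "(A-B)^2/(A-C)^2 < 1 \<or> (A-B)^2/(B-C)^2 < 1"
  proof -
    show "(A-B)^2/(A-C)^2 > 0" "(A-B)^2/(B-C)^2 > 0" using ne by auto
    have "(A-B)^2 < (A-C)^2" using AB BC C0 by (intro power_strict_mono) auto
    then show "(A-B)^2/(A-C)^2 < 1 \<or> (A-B)^2/(B-C)^2 < 1" using ne by simp
  qed
  have al: "(a^2-b^2)/a > 0" "(a^2-b^2)/b > 0" "(a^2 - c^2)/a > 0" "(b^2 - c^2)/b > 0"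
    using AB BC pos unfolding A_def B_def C_def by simp_all
  show ?thesis
    unfolding s1[symmetric] s2[symmetric]
  proof (rule L_int[OF al])
    show "0 \<le> u0" "u0 \<le> 1" using u0 by simp_all
    show "((a^2-b^2)/a)^2/((a^2 - c^2)/a)^2 * u0^3 + ((a^2-b^2)/b)^2/((b^2 - c^2)/b)^2 * (1-u0)^3 = 1"
      unfolding k1 k2 by (rule g)
    fix u assume u: "0 \<le> u" "u \<le> 1" "((a^2-b^2)/a)^2/((a^2 - c^2)/a)^2 * u^3 + ((a^2-b^2)/b)^2/((b^2 - c^2)/b)^2 * (1-u)^3 = 1"
    show "u = u0"
      by (rule L_uniq[OF kk u(1,2)]) (use u u0 g in \<open>simp_all add: k1 k2\<close>)
  qed
qed

lemma flip4: "(-Q)^3*(-R)^3/(X*(-P)*(-S)^3) = Q^3*R^3/(X*P*S^3)" for Q R X P S :: real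
  by (simp add: power3_eq_cube)
lemma flip2: "(-Q)^3*R^3/(X*P*(-S)^3) = Q^3*R^3/(X*P*S^3)" for Q R X P S :: real
  by (simp add: power3_eq_cube)

lemma id9: "(A-B)*(A+B-2*C)^3 + (A-C)*(2*B-A-C)^3 = (B-C)*(2*A-B-C)^3" for A B C :: real
  by (simp add: algebra_simps power2_eq_square power3_eq_cube)

lemma c9:
  fixes a b c x y :: real
  assumes abc: "a > b" "b > c" "c > 0" "a^2 + c^2 \<le> 2*b^2"
  shows "((\<exists>t\<in>{0..<2*pi}. x = (a^2 - b^2)/b * cos t \<and> y = (a^2 - c^2)/c * sin t) \<and>
          (\<exists>t\<in>{0..<2*pi}. x = (b^2-c^2)/b * cos t ^ 3 \<and> y = (b^2-c^2)/c * sin t ^ 3)) \<longleftrightarrow>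
         ((x = sqrt ((b^2 - a^2)^3*(2*c^2 - b^2 - a^2)^3 / (b^2*(c^2 - b^2)*(b^2 + c^2 - 2*a^2)^3)) \<or>
           x = - sqrt ((b^2 - a^2)^3*(2*c^2 - b^2 - a^2)^3 / (b^2*(c^2 - b^2)*(b^2 + c^2 - 2*a^2)^3))) \<and>
          (y = sqrt ((c^2 - a^2)^3*(2*b^2 - c^2 - a^2)^3 / (c^2*(b^2 - c^2)*(b^2 + c^2 - 2*a^2)^3)) \<or>
           y = - sqrt ((c^2 - a^2)^3*(2*b^2 - c^2 - a^2)^3 / (c^2*(b^2 - c^2)*(b^2 + c^2 - 2*a^2)^3))))"
proof -
  define A where "A = a^2"
  define B where "B = b^2"
  define C where "C = c^2"
  have pos: "a > 0" "b > 0" using abc by auto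
  have C0: "C > 0" unfolding C_def using abc by simp
  have BC: "B > C" unfolding B_def C_def using abc by (simp add: power_strict_mono)
  have AB: "A > B" unfolding A_def B_def using abc by (simp add: power_strict_mono)
  have ACB: "A + C \<le> 2*B" unfolding A_def B_def C_def using abc by simp
  have ne: "A \<noteq> 0" "B \<noteq> 0" "C \<noteq> 0" "A \<noteq> B" "B \<noteq> A" "2*A - B - C \<noteq> 0" "A - C \<noteq> 0" "B - C \<noteq> 0" "A-B \<noteq> 0"
     "2*A \<noteq> B + C" "A \<noteq> C" "B \<noteq> C" "A + B - 2*C \<noteq> 0"
    using AB BC C0 by auto
  define u0 where "u0 = (A-B)*(A+B-2*C)/((B-C)*(2*A-B-C))"
  have d: "(B-C)*(2*A-B-C) > 0" using AB BC C0 by simp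
  have "1 - u0 = ((B-C)*(2*A-B-C) - (A-B)*(A+B-2*C))/((B-C)*(2*A-B-C))"
    unfolding u0_def using d ne by (simp add: diff_divide_distrib)
  also have "(B-C)*(2*A-B-C) - (A-B)*(A+B-2*C) = (A-C)*(2*B-A-C)" by (simp add: algebra_simps)
  finally have om: "1 - u0 = (A-C)*(2*B-A-C)/((B-C)*(2*A-B-C))" .
  have u0: "0 \<le> u0" "u0 \<le> 1"
  proof -
    show "0 \<le> u0" unfolding u0_def using d AB BC C0 by simp
    have "1 - u0 \<ge> 0" unfolding om using d AB BC ACB by simp
    then show "u0 \<le> 1" by simp
  qed
  have u3: "u0^3 = (A-B)^3*(A+B-2*C)^3/((B-C)^3*(2*A-B-C)^3)" unfolding u0_def by (simp add: power_divide power_mult_distrib)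
  have v3: "(1-u0)^3 = (A-C)^3*(2*B-A-C)^3/((B-C)^3*(2*A-B-C)^3)" unfolding om by (simp add: power_divide power_mult_distrib)
  have k1: "((b^2-c^2)/b)^2/((a^2 - b^2)/b)^2 = (B-C)^2/(A-B)^2" unfolding A_def B_def C_def using pos by (simp add: power_divide)
  have k2: "((b^2-c^2)/c)^2/((a^2 - c^2)/c)^2 = (B-C)^2/(A-C)^2" unfolding A_def B_def C_def using abc by (simp add: power_divide)
  have t1: "(B-C)^2/(A-B)^2 * u0^3 = (A-B)*(A+B-2*C)^3/((B-C)*(2*A-B-C)^3)"
    unfolding u3 using ne by (intro G1) auto
  have t2: "(B-C)^2/(A-C)^2 * (1-u0)^3 = (A-C)*(2*B-A-C)^3/((B-C)*(2*A-B-C)^3)"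
    unfolding v3 using ne by (intro G1) auto
  have g: "(B-C)^2/(A-B)^2 * u0^3 + (B-C)^2/(A-C)^2 * (1-u0)^3 = 1"
    unfolding t1 t2 add_divide_distrib[symmetric] id9 using ne by simp
  have s1: "((b^2-c^2)/b)^2 * u0^3 = (b^2 - a^2)^3*(2*c^2 - b^2 - a^2)^3 / (b^2*(c^2 - b^2)*(b^2 + c^2 - 2*a^2)^3)"
  proof -
    have "((b^2-c^2)/b)^2 = (B-C)^2/B" unfolding B_def C_def by (simp add: power_divide)
    moreover have "(B-C)^2/B * u0^3 = (B-A)^3*(2*C-B-A)^3/(B*(C-B)*(B+C-2*A)^3)"
    proof -
      have "(B-C)^2/B * u0^3 = (A-B)^3*(A+B-2*C)^3/(B*(B-C)*(2*A-B-C)^3)"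
        unfolding u3 using ne by (intro G2) auto
      also have "\<dots> = (-(A-B))^3*(-(A+B-2*C))^3/(B*(-(B-C))*(-(2*A-B-C))^3)"
        unfolding flip4 by simp
      also have "\<dots> = (B-A)^3*(2*C-B-A)^3/(B*(C-B)*(B+C-2*A)^3)"
        by (simp add: algebra_simps)
      finally show ?thesis .
    qed
    ultimately show ?thesis unfolding A_def B_def C_def by simp
  qed
  have s2: "((b^2-c^2)/c)^2 * (1-u0)^3 = (c^2 - a^2)^3*(2*b^2 - c^2 - a^2)^3 / (c^2*(b^2 - c^2)*(b^2 + c^2 - 2*a^2)^3)"
  proof -
    have "((b^2-c^2)/c)^2 = (B-C)^2/C" unfolding B_def C_def by (simp add: power_divide)
    moreover have "(B-C)^2/C * (1-u0)^3 = (C-A)^3*(2*B-C-A)^3/(C*(B-C)*(B+C-2*A)^3)"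
    proof -
      have "(B-C)^2/C * (1-u0)^3 = (A-C)^3*(2*B-A-C)^3/(C*(B-C)*(2*A-B-C)^3)"
        unfolding v3 using ne by (intro G2) auto
      also have "\<dots> = (-(A-C))^3*(2*B-A-C)^3/(C*(B-C)*(-(2*A-B-C))^3)"
        unfolding flip2 by simp
      also have "\<dots> = (C-A)^3*(2*B-C-A)^3/(C*(B-C)*(B+C-2*A)^3)"
        by (simp add: algebra_simps)
      finally show ?thesis .
    qed
    ultimately show ?thesis unfolding A_def B_def C_def by simp
  qed
  have kk: "(B-C)^2/(A-B)^2 > 0" "(B-C)^2/(A-C)^2 > 0" "(B-C)^2/(A-B)^2 < 1 \<or> (B-C)^2/(A-C)^2 < 1"
  proof -
    show "(B-C)^2/(A-B)^2 > 0" "(B-C)^2/(A-C)^2 > 0" using ne by auto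
    have "(B-C)^2 < (A-C)^2" using AB BC C0 by (intro power_strict_mono) auto
    then show "(B-C)^2/(A-B)^2 < 1 \<or> (B-C)^2/(A-C)^2 < 1" using ne by simp
  qed
  have al: "(b^2-c^2)/b > 0" "(b^2-c^2)/c > 0" "(a^2 - b^2)/b > 0" "(a^2 - c^2)/c > 0"
    using AB BC pos abc unfolding A_def B_def C_def by simp_all
  show ?thesis
    unfolding s1[symmetric] s2[symmetric]
  proof (rule L_int[OF al])
    show "0 \<le> u0" "u0 \<le> 1" using u0 by simp_all
    show "((b^2-c^2)/b)^2/((a^2 - b^2)/b)^2 * u0^3 + ((b^2-c^2)/c)^2/((a^2 - c^2)/c)^2 * (1-u0)^3 = 1"
      unfolding k1 k2 by (rule g)
    fix u assume u: "0 \<le> u" "u \<le> 1" "((b^2-c^2)/b)^2/((a^2 - b^2)/b)^2 * u^3 + ((b^2-c^2)/c)^2/((a^2 - c^2)/c)^2 * (1-u)^3 = 1"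
    show "u = u0"
      by (rule L_uniq[OF kk u(1,2)]) (use u u0 g in \<open>simp_all add: k1 k2\<close>)
  qed
qed

lemma EE_lin:
  fixes A B C s t :: "'a::field"
  assumes ne: "A \<noteq> 0" "B \<noteq> 0" "C \<noteq> 0" "A - B \<noteq> 0" "A - C \<noteq> 0" "B - C \<noteq> 0" "2*A*B - A*C - B*C \<noteq> 0"
  shows "(s/A + t/B = 1 \<and> A* s/(A-C)^2 + B*t/(B-C)^2 = 1) \<longleftrightarrow>
         (s = A*(A-C)^2*(2*B-C)/((A-B)*(2*A*B - A*C - B*C)) \<and> t = B*(B-C)^2*(2*A-C)/((B-A)*(2*A*B - A*C - B*C)))"
proof -
  have det: "(1/A)*(B/(B-C)^2) - (1/B)*(A/(A-C)^2) = C*(A-B)*(2*A*B - A*C - B*C)/(A*B*(A-C)^2*(B-C)^2)"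
    using ne by (simp add: field_simps) (simp add: algebra_simps power2_eq_square power4_eq_xxxx)
  have dne: "(1/A)*(B/(B-C)^2) - (1/B)*(A/(A-C)^2) \<noteq> 0" unfolding det using ne by simp
  have n1: "B/(B-C)^2 - 1/B = C*(2*B-C)/(B*(B-C)^2)"
    using ne by (simp add: field_simps) (simp add: algebra_simps power2_eq_square power4_eq_xxxx)
  have n2: "1/A - A/(A-C)^2 = C*(2*A-C)/((-A)*(A-C)^2)"
    using ne by (simp add: field_simps) (simp add: algebra_simps power2_eq_square power4_eq_xxxx)
  have at1: "\<And>P Q R K S::'a. Q \<noteq> 0 \<Longrightarrow> R \<noteq> 0 \<Longrightarrow> K \<noteq> 0 \<Longrightarrow> S \<noteq> 0 \<Longrightarrow>
      C*P/(B*Q^2) / (C*R*K/(A*B*S^2*Q^2)) = A*S^2*P/(R*K)"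
    using ne by (simp add: field_simps power2_eq_square)
  have at2: "\<And>P Q R K S::'a. Q \<noteq> 0 \<Longrightarrow> R \<noteq> 0 \<Longrightarrow> K \<noteq> 0 \<Longrightarrow> S \<noteq> 0 \<Longrightarrow>
      C*P/((-A)*S^2) / (C*R*K/(A*B*S^2*Q^2)) = B*Q^2*P/((-R)*K)"
    using ne by (simp add: field_simps power2_eq_square)
  have X: "(B/(B-C)^2 - 1/B)/((1/A)*(B/(B-C)^2) - (1/B)*(A/(A-C)^2)) = A*(A-C)^2*(2*B-C)/((A-B)*(2*A*B - A*C - B*C))"
    unfolding det n1 using ne by (intro at1) auto
  have Y: "(1/A - A/(A-C)^2)/((1/A)*(B/(B-C)^2) - (1/B)*(A/(A-C)^2)) = B*(B-C)^2*(2*A-C)/((B-A)*(2*A*B - A*C - B*C))"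
    unfolding det n2 using ne by (subst at2) auto
  have e: "s/A + t/B = (1/A)* s + (1/B)*t" "A* s/(A-C)^2 + B*t/(B-C)^2 = (A/(A-C)^2)* s + (B/(B-C)^2)*t"
    by simp_all
  show ?thesis unfolding e lin2[OF dne] X Y ..
qed

lemma L_ee:
  fixes p1 q1 p2 q2 X Y x y :: real
  assumes pos: "p1 > 0" "q1 > 0" "p2 > 0" "q2 > 0"
    and H: "\<And>s t. (s/p1^2 + t/q1^2 = 1 \<and> s/p2^2 + t/q2^2 = 1) \<longleftrightarrow> (s = X \<and> t = Y)"
  shows "((\<exists>t\<in>{0..<2*pi}. x = p1 * cos t \<and> y = q1 * sin t) \<and>
          (\<exists>t\<in>{0..<2*pi}. x = p2 * cos t \<and> y = q2 * sin t)) \<longleftrightarrow> (x^2 = X \<and> y^2 = Y)"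
  unfolding L_ell[OF pos(1,2)] L_ell[OF pos(3,4)] power_divide H[symmetric] ..

lemma sq_pm: "w \<ge> 0 \<Longrightarrow> z^2 = w \<longleftrightarrow> (z = sqrt w \<or> z = - sqrt w)" for z w :: real
  by (metis power2_eq_iff real_sqrt_pow2)

lemma c4_lin:
  fixes a b c s t :: real
  assumes abc: "a > b" "b > c" "c > 0"
  shows "(s/a^2 + t/b^2 = 1 \<and> s/((a^2 - c^2)/a)^2 + t/((b^2 - c^2)/b)^2 = 1) \<longleftrightarrow>
         (s = a^2*(a^2 - c^2)^2*(2*b^2 - c^2) / ((a^2 - b^2)*(2*a^2*b^2 - a^2*c^2 - b^2*c^2)) \<and>
          t = b^2*(b^2 - c^2)^2*(2*a^2 - c^2) / ((b^2 - a^2)*(2*a^2*b^2 - b^2*c^2 - a^2*c^2)))"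
proof -
  define A where "A = a^2"
  define B where "B = b^2"
  define C where "C = c^2"
  have C0: "C > 0" unfolding C_def using abc by simp
  have BC: "B > C" unfolding B_def C_def using abc by (simp add: power_strict_mono)
  have AB: "A > B" unfolding A_def B_def using abc by (simp add: power_strict_mono)
  have k: "2*A*B - A*C - B*C > 0"
  proof -
    have "A*B > A*C" "A*B > B*C" using AB BC C0 by simp_all
    then show ?thesis by linarith
  qed
  have ne: "A \<noteq> 0" "B \<noteq> 0" "C \<noteq> 0" "A - B \<noteq> 0" "A - C \<noteq> 0" "B - C \<noteq> 0" "2*A*B - A*C - B*C \<noteq> 0"
    using AB BC C0 k by auto
  have e: "s/((A - C)/a)^2 = A * s/(A-C)^2" "t/((B - C)/b)^2 = B * t/(B-C)^2"
    unfolding A_def B_def C_def using abc by (simp_all add: power_divide)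
  have f: "2*A*B - B*C - A*C = 2*A*B - A*C - B*C" by simp
  show ?thesis
    unfolding A_def[symmetric] B_def[symmetric] C_def[symmetric] e f EE_lin[OF ne] ..
qed

lemma c5_lin:
  fixes a b c s t :: real
  assumes abc: "a > b" "b > c" "c > 0" "b^2 \<ge> 2*c^2"
  shows "(s/a^2 + t/c^2 = 1 \<and> s/((a^2 - b^2)/a)^2 + t/((b^2 - c^2)/c)^2 = 1) \<longleftrightarrow>
         (s = a^2*(a^2 - b^2)^2*(2*c^2 - b^2) / ((a^2 - c^2)*(2*a^2*c^2 - a^2*b^2 - b^2*c^2)) \<and>
          t = c^2*(c^2 - b^2)^2*(2*a^2 - b^2) / ((c^2 - a^2)*(2*a^2*c^2 - a^2*b^2 - b^2*c^2)))"
proof -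
  define A where "A = a^2"
  define B where "B = b^2"
  define C where "C = c^2"
  have C0: "C > 0" unfolding C_def using abc by simp
  have BC: "B > C" unfolding B_def C_def using abc by (simp add: power_strict_mono)
  have AB: "A > B" unfolding A_def B_def using abc by (simp add: power_strict_mono)
  have B2C: "B \<ge> 2*C" unfolding B_def C_def using abc by simp
  have k: "2*A*C - A*B - C*B < 0"
  proof -
    have "A*B \<ge> A*(2*C)" using B2C AB C0 by simp
    moreover have "C*B > 0" using BC C0 by simp
    ultimately show ?thesis by linarith
  qed
  have ne: "A \<noteq> 0" "C \<noteq> 0" "B \<noteq> 0" "A - C \<noteq> 0" "A - B \<noteq> 0" "C - B \<noteq> 0" "2*A*C - A*B - C*B \<noteq> 0"
    using AB BC C0 k by auto
  have e: "s/((A - B)/a)^2 = A * s/(A-B)^2" "t/((B - C)/c)^2 = C * t/(C-B)^2"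
    unfolding A_def B_def C_def using abc by (simp_all add: power_divide power2_commute)
  have f: "2*A*C - A*B - C*B = 2*A*C - A*B - B*C" by simp
  show ?thesis
    unfolding A_def[symmetric] B_def[symmetric] C_def[symmetric] e f EE_lin[OF ne] ..
qed

lemma c6_lin:
  fixes a b c s t :: real
  assumes abc: "a > b" "b > c" "c > 0" "a^2 \<ge> 2*c^2"
  shows "(s/b^2 + t/c^2 = 1 \<and> s/((a^2 - b^2)/b)^2 + t/((a^2 - c^2)/c)^2 = 1) \<longleftrightarrow>
         (s = b^2*(b^2 - a^2)^2*(2*c^2 - a^2) / ((b^2 - c^2)*(2*b^2*c^2 - a^2*b^2 - a^2*c^2)) \<and>
          t = c^2*(c^2 - a^2)^2*(2*b^2 - a^2) / ((c^2 - b^2)*(2*b^2*c^2 - a^2*b^2 - a^2*c^2)))"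
proof -
  define A where "A = a^2"
  define B where "B = b^2"
  define C where "C = c^2"
  have C0: "C > 0" unfolding C_def using abc by simp
  have BC: "B > C" unfolding B_def C_def using abc by (simp add: power_strict_mono)
  have AB: "A > B" unfolding A_def B_def using abc by (simp add: power_strict_mono)
  have A2C: "A \<ge> 2*C" unfolding A_def C_def using abc by simp
  have k: "2*B*C - B*A - C*A < 0"
  proof -
    have "B*A \<ge> B*(2*C)" using A2C AB BC C0 by simp
    moreover have "C*A > 0" using AB BC C0 by simp
    ultimately show ?thesis by linarith
  qed
  have ne: "B \<noteq> 0" "C \<noteq> 0" "A \<noteq> 0" "B - C \<noteq> 0" "B - A \<noteq> 0" "C - A \<noteq> 0" "2*B*C - B*A - C*A \<noteq> 0"
    using AB BC C0 k by auto
  have e: "s/((A - B)/b)^2 = B * s/(B-A)^2" "t/((A - C)/c)^2 = C * t/(C-A)^2"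
    unfolding A_def B_def C_def using abc by (simp_all add: power_divide power2_commute)
  have f: "2*B*C - B*A - C*A = 2*B*C - A*B - A*C" by simp
  show ?thesis
    unfolding A_def[symmetric] B_def[symmetric] C_def[symmetric] e f EE_lin[OF ne] ..
qed

lemma normal_xz: "ell_normal a b c (X,0,Z) = (X/a^2, 0, Z/c^2)"
  by (simp add: ell_normal_def)

lemma norm3: "norm ((x,y,z)::pt3) = sqrt (x^2 + y^2 + z^2)"
  by (simp add: norm_Pair add.assoc)

lemma W_expl:
  "weingarten a b c (X,0,Z) (v1,v2,v3) =
    (let n2 = (X/a^2)^2 + (Z/c^2)^2; dn = (v1/a^2 * (X/a^2) + v3/c^2 * (Z/c^2))/n2 in
     (1/sqrt n2) *\<^sub>R (v1/a^2 - dn * (X/a^2), v2/b^2, v3/c^2 - dn * (Z/c^2)))"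
proof -
  have i1: "inner (X/a^2, 0::real, Z/c^2) (X/a^2, 0::real, Z/c^2) = (X/a^2)^2 + (Z/c^2)^2"
    by (simp add: power2_eq_square)
  have i2: "inner (v1/a^2, v2/b^2, v3/c^2) (X/a^2, 0::real, Z/c^2) = v1/a^2 * (X/a^2) + v3/c^2 * (Z/c^2)"
    by simp
  have i3: "norm (X/a^2, 0::real, Z/c^2) = sqrt ((X/a^2)^2 + (Z/c^2)^2)"
    by (simp add: norm3)
  show ?thesis
    by (simp only: weingarten_def Let_def normal_xz prod.case i1 i2 i3) simp
qed

lemma kt_comp:
  fixes A C X Z n2 :: real
  assumes "A > 0" "C > 0" "C*X^2 + A*Z^2 = A*C" "n2 > 0" "n2 * (A^2*C^2) = C^2*X^2 + A^2*Z^2"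
  shows "(Z/C)/A - ((Z/C)/A*(X/A) + (-X/A)/C*(Z/C))/n2 * (X/A) = 1/(A*C*n2) * (Z/C)"
    and "(-X/A)/C - ((Z/C)/A*(X/A) + (-X/A)/C*(Z/C))/n2 * (Z/C) = 1/(A*C*n2) * (-X/A)"
proof -
  show "(Z/C)/A - ((Z/C)/A*(X/A) + (-X/A)/C*(Z/C))/n2 * (X/A) = 1/(A*C*n2) * (Z/C)"
    using assms by (simp add: field_simps) algebra
  show "(-X/A)/C - ((Z/C)/A*(X/A) + (-X/A)/C*(Z/C))/n2 * (Z/C) = 1/(A*C*n2) * (-X/A)"
    using assms by (simp add: field_simps) algebra
qed

lemma kt_comp2:
  fixes A C X Z n2 be :: real
  assumes "A > 0" "C > 0" "C*X^2 + A*Z^2 = A*C" "n2 > 0" "n2 * (A^2*C^2) = C^2*X^2 + A^2*Z^2"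
  shows "(be*(Z/C))/A - ((be*(Z/C))/A*(X/A) + (be*(-X/A))/C*(Z/C))/n2 * (X/A) = 1/(A*C*n2) * (be*(Z/C))"
    and "(be*(-X/A))/C - ((be*(Z/C))/A*(X/A) + (be*(-X/A))/C*(Z/C))/n2 * (Z/C) = 1/(A*C*n2) * (be*(-X/A))"
proof -
  show "(be*(Z/C))/A - ((be*(Z/C))/A*(X/A) + (be*(-X/A))/C*(Z/C))/n2 * (X/A) = 1/(A*C*n2) * (be*(Z/C))"
    using assms by (simp add: field_simps) algebra
  show "(be*(-X/A))/C - ((be*(Z/C))/A*(X/A) + (be*(-X/A))/C*(Z/C))/n2 * (Z/C) = 1/(A*C*n2) * (be*(-X/A))"
    using assms by (simp add: field_simps) algebra
qed

lemma pc_xz: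
  fixes a b c X Z :: real
  assumes pos: "a > 0" "b > 0" "c > 0" and on: "X^2/a^2 + Z^2/c^2 = 1"
  shows "principal_curvatures a b c (X,0,Z) =
    {1/(b^2* sqrt ((X/a^2)^2 + (Z/c^2)^2)), 1/(a^2*c^2*((X/a^2)^2 + (Z/c^2)^2)* sqrt ((X/a^2)^2 + (Z/c^2)^2))}"
proof -
  define n2 where "n2 = (X/a^2)^2 + (Z/c^2)^2"
  define s where "s = sqrt n2"
  define A where "A = a^2"
  define C where "C = c^2"
  have A0: "A > 0" "C > 0" unfolding A_def C_def using pos by auto
  have on2: "C*X^2 + A*Z^2 = A*C" using on A0 unfolding A_def[symmetric] C_def[symmetric] by (simp add: field_simps)
  have n2pos: "n2 > 0"
  proof -
    have "X \<noteq> 0 \<or> Z \<noteq> 0" using on by auto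
    then show ?thesis unfolding n2_def using pos by (auto simp: add_pos_nonneg add_nonneg_pos)
  qed
  have n2e: "n2 * (A^2*C^2) = C^2*X^2 + A^2*Z^2" unfolding n2_def A_def C_def using pos by (simp add: field_simps)
  have s0: "s > 0" unfolding s_def using n2pos by simp
  have W: "\<And>v1 v2 v3. weingarten a b c (X,0,Z) (v1,v2,v3) =
      (1/s) *\<^sub>R (v1/A - (v1/A * (X/A) + v3/C * (Z/C))/n2 * (X/A), v2/b^2, v3/C - (v1/A * (X/A) + v3/C * (Z/C))/n2 * (Z/C))"
    unfolding W_expl Let_def n2_def[symmetric] s_def[symmetric] A_def C_def ..
  have N: "ell_normal a b c (X,0,Z) = (X/A, 0, Z/C)" unfolding normal_xz A_def C_def ..
  let ?ky = "1/(b^2* s)"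
  let ?kt = "1/(A*C*n2* s)"
  have "principal_curvatures a b c (X,0,Z) = {?ky, ?kt}"
  proof (rule set_eqI, rule iffI)
    fix k assume "k \<in> principal_curvatures a b c (X,0,Z)"
    then obtain v where v: "v \<noteq> 0" "inner v (ell_normal a b c (X,0,Z)) = 0" "weingarten a b c (X,0,Z) v = k *\<^sub>R v"
      unfolding principal_curvatures_def by blast
    obtain v1 v2 v3 where vv: "v = (v1,v2,v3)" by (cases v) auto
    have inn: "v1 * (X/A) + v3 * (Z/C) = 0" using v(2) unfolding vv N by simp
    have eqs: "(1/s) * (v1/A - (v1/A * (X/A) + v3/C * (Z/C))/n2 * (X/A)) = k * v1"
              "(1/s) * (v2/b^2) = k * v2"
              "(1/s) * (v3/C - (v1/A * (X/A) + v3/C * (Z/C))/n2 * (Z/C)) = k * v3"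
      using v(3) unfolding vv W by simp_all
    show "k \<in> {?ky, ?kt}"
    proof (cases "v2 = 0")
      case False
      have "?ky * v2 = k * v2" using eqs(2) by (simp add: mult.commute)
      then have "k = ?ky" using False by (metis mult_cancel_right)
      then show ?thesis by simp
    next
      case True
      define be where "be = (v1*(Z/C) - v3*(X/A))/n2"
      have v1: "v1 = be*(Z/C)"
      proof -
        have "v1 * n2 = (v1*(Z/C) - v3*(X/A))*(Z/C) + (v1 * (X/A) + v3 * (Z/C))*(X/A)"
          unfolding n2_def A_def C_def by (simp add: algebra_simps power2_eq_square)
        then have "v1 * n2 = (v1*(Z/C) - v3*(X/A))*(Z/C)" using inn by simp
        then show ?thesis unfolding be_def using n2pos A0 by (simp add: field_simps)
      qed
      have v3: "v3 = be*(-X/A)"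
      proof -
        have "v3 * n2 = -(v1*(Z/C) - v3*(X/A))*(X/A) + (v1 * (X/A) + v3 * (Z/C))*(Z/C)"
          unfolding n2_def A_def C_def by (simp add: algebra_simps power2_eq_square)
        then have "v3 * n2 = -(v1*(Z/C) - v3*(X/A))*(X/A)" using inn by simp
        then show ?thesis unfolding be_def using n2pos A0 by (simp add: field_simps)
      qed
      note kc = kt_comp2[OF A0 on2 n2pos n2e, of be]
      have e1: "(1/s) * (v1/A - (v1/A * (X/A) + v3/C * (Z/C))/n2 * (X/A)) = ?kt * v1"
        unfolding v1 v3 kc(1) by simp
      have e3: "(1/s) * (v3/C - (v1/A * (X/A) + v3/C * (Z/C))/n2 * (Z/C)) = ?kt * v3"
        unfolding v1 v3 kc(2) by simp
      have "k * v1 = ?kt * v1" using eqs(1) e1 by simp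
      moreover have "k * v3 = ?kt * v3" using eqs(3) e3 by simp
      moreover have "v1 \<noteq> 0 \<or> v3 \<noteq> 0" using v(1) True vv by (auto simp: zero_prod_def)
      ultimately have "k = ?kt" by (metis mult_cancel_right mult.commute)
      then show ?thesis by simp
    qed
  next
    fix k assume k: "k \<in> {?ky, ?kt}"
    show "k \<in> principal_curvatures a b c (X,0,Z)"
    proof (cases "k = ?ky")
      case True
      have "weingarten a b c (X,0,Z) (0,1,0) = ?ky *\<^sub>R (0,1,0)" unfolding W by simp
      moreover have "inner (0::real,1::real,0::real) (ell_normal a b c (X,0,Z)) = 0" unfolding N by simp
      moreover have "(0::real,1::real,0::real) \<noteq> 0" by (simp add: zero_prod_def)
      ultimately show ?thesis unfolding principal_curvatures_def True by blast
    next
      case False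
      then have kk: "k = ?kt" using k by simp
      note kc = kt_comp2[OF A0 on2 n2pos n2e, of 1]
      have "weingarten a b c (X,0,Z) (Z/C,0,-X/A) = ?kt *\<^sub>R (Z/C,0,-X/A)"
        unfolding W using kc s0 by simp
      moreover have "inner (Z/C,0::real,-X/A) (ell_normal a b c (X,0,Z)) = 0" unfolding N by simp
      moreover have "(Z/C,0::real,-X/A) \<noteq> 0"
      proof -
        have "X \<noteq> 0 \<or> Z \<noteq> 0" using on by auto
        then show ?thesis using A0 by (auto simp: zero_prod_def)
      qed
      ultimately show ?thesis unfolding principal_curvatures_def kk by blast
    qed
  qed
  then show ?thesis unfolding s_def n2_def A_def C_def by simp
qed

lemma on_param: "a > 0 \<Longrightarrow> c > 0 \<Longrightarrow> (a * cos t)^2/a^2 + (-c * sin t)^2/c^2 = 1" for a c t :: real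
proof -
  assume "a > 0" "c > 0"
  have e: "(a * cos t)^2 = a^2 * (cos t)^2" "(-c * sin t)^2 = c^2 * (sin t)^2"
    by (simp_all only: power_mult_distrib power2_minus mult_minus_left)
  show ?thesis unfolding e using \<open>a > 0\<close> \<open>c > 0\<close> by simp
qed

lemma kappa_xz:
  fixes a b c X Z :: real
  assumes pos: "a > 0" "b > 0" "c > 0" and on: "X^2/a^2 + Z^2/c^2 = 1"
  defines "n2 \<equiv> (X/a^2)^2 + (Z/c^2)^2"
  shows "kappa1 a b c (X,0,Z) = min (1/(b^2* sqrt n2)) (1/(a^2*c^2*n2* sqrt n2))"
    and "kappa2 a b c (X,0,Z) = max (1/(b^2* sqrt n2)) (1/(a^2*c^2*n2* sqrt n2))"
  unfolding kappa1_def kappa2_def pc_xz[OF assms(1-4)] n2_def by simp_all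

lemma centers_xz:
  fixes a b c X Z :: real
  assumes pos: "a > 0" "b > 0" "c > 0" and on: "X^2/a^2 + Z^2/c^2 = 1"
  defines "n2 \<equiv> (X/a^2)^2 + (Z/c^2)^2"
  shows "curvature_center a b c (X,0,Z) (1/(b^2* sqrt n2)) = (X - b^2*(X/a^2), 0, Z - b^2*(Z/c^2))"
    and "curvature_center a b c (X,0,Z) (1/(a^2*c^2*n2* sqrt n2)) = (X - a^2*c^2*n2*(X/a^2), 0, Z - a^2*c^2*n2*(Z/c^2))"
proof -
  have n2pos: "n2 > 0"
  proof -
    have "X \<noteq> 0 \<or> Z \<noteq> 0" using on by auto
    then show ?thesis unfolding n2_def using pos by (auto simp: add_pos_nonneg add_nonneg_pos)
  qed
  have nN: "norm (ell_normal a b c (X,0,Z)) = sqrt n2" unfolding normal_xz norm3 n2_def by simp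
  have s0: "sqrt n2 > 0" using n2pos by simp
  show "curvature_center a b c (X,0,Z) (1/(b^2* sqrt n2)) = (X - b^2*(X/a^2), 0, Z - b^2*(Z/c^2))"
    unfolding curvature_center_def nN unfolding normal_xz using s0 by simp
  show "curvature_center a b c (X,0,Z) (1/(a^2*c^2*n2* sqrt n2)) = (X - a^2*c^2*n2*(X/a^2), 0, Z - a^2*c^2*n2*(Z/c^2))"
    unfolding curvature_center_def nN unfolding normal_xz using s0 by simp
qed

lemma recip_less: "0 < x \<Longrightarrow> 0 < y \<Longrightarrow> (1/y < 1/x) = (x < y)" for x y :: real
  by (metis inverse_eq_divide inverse_less_iff_less)

lemma sheet_facts:
  fixes a b c t :: real
  assumes abc: "a > b" "b > c" "c > 0"
  defines "P \<equiv> (a * cos t, 0::real, -c * sin t)"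
  shows "P \<in> ellipsoid a b c"
    and "(a^2-c^2)*(cos t)^2 > a^2-b^2 \<Longrightarrow>
           curvature_center a b c P (kappa2 a b c P) = astroida5 a b c t \<and>
           curvature_center a b c P (kappa1 a b c P) = ellipse8 a b c t"
    and "(a^2-c^2)*(cos t)^2 < a^2-b^2 \<Longrightarrow>
           curvature_center a b c P (kappa1 a b c P) = astroida5 a b c t \<and>
           curvature_center a b c P (kappa2 a b c P) = ellipse8 a b c t"
proof -
  have pos: "a > 0" "b > 0" "c > 0" using abc by auto
  note on = on_param[OF pos(1,3), of t]
  show "P \<in> ellipsoid a b c" unfolding P_def ellipsoid_def ellq_def using on by simp
  define A where "A = a^2"
  define B where "B = b^2"
  define C where "C = c^2"
  define qc where "qc = cos t"
  define qs where "qs = sin t"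
  have sc: "qs^2 = 1 - qc^2" unfolding qs_def qc_def by (simp add: sin_squared_eq)
  have A0: "A > 0" "B > 0" "C > 0" unfolding A_def B_def C_def using pos by auto
  define n2 where "n2 = (a * cos t/a^2)^2 + (-c * sin t/c^2)^2"
  have n2v: "n2 = qc^2/A + qs^2/C" unfolding n2_def A_def C_def qc_def qs_def using pos
    by (simp add: power_mult_distrib power_divide power2_eq_square)
  have n2pos: "n2 > 0" unfolding n2v
  proof (cases "qc = 0")
    case True
    then have "qs^2 = 1" using sc by simp
    then show "qc^2/A + qs^2/C > 0" using True A0 by simp
  next
    case False
    then have "qc^2/A > 0" using A0 by simp
    moreover have "qs^2/C \<ge> 0" using A0 by simp
    ultimately show "qc^2/A + qs^2/C > 0" by linarith
  qed
  have s0: "sqrt n2 > 0" using n2pos by simp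
  have ACn: "A*C*n2 = C*qc^2 + A*qs^2" unfolding n2v using A0 by (simp add: field_simps)
  note kap = kappa_xz[OF pos on, folded n2_def, folded P_def]
  note cen = centers_xz[OF pos on, folded n2_def, folded P_def]
  have cen_t: "curvature_center a b c P (1/(a^2*c^2*n2* sqrt n2)) = astroida5 a b c t"
  proof -
    have e1: "a * cos t - a^2*c^2*n2*(a * cos t/a^2) = (a^2 - c^2)/a * cos t ^ 3"
    proof -
      have "a * qc - A*C*n2*(a * qc/A) = (A - C)/a * qc^3"
        unfolding ACn using A0 pos sc unfolding A_def[symmetric]
        apply (simp add: field_simps)
        apply (simp add: A_def algebra_simps power2_eq_square power3_eq_cube)
        apply algebra
        done
      then show ?thesis unfolding A_def C_def qc_def .
    qed
    have e2: "-c * sin t - a^2*c^2*n2*(-c * sin t/c^2) = (a^2 - c^2)/c * sin t ^ 3"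
    proof -
      have "-c * qs - A*C*n2*(-c * qs/C) = (A - C)/c * qs^3"
        unfolding ACn using A0 pos sc unfolding C_def[symmetric]
        apply (simp add: field_simps)
        apply (simp add: C_def algebra_simps power2_eq_square power3_eq_cube)
        apply algebra
        done
      then show ?thesis unfolding A_def C_def qs_def .
    qed
    show ?thesis unfolding cen(2) astroida5_def e1 e2 ..
  qed
  have cen_y: "curvature_center a b c P (1/(b^2* sqrt n2)) = ellipse8 a b c t"
    unfolding cen(1) ellipse8_def using pos by (simp add: field_simps) (simp add: algebra_simps power2_eq_square power4_eq_xxxx)
  have cmp: "1/(a^2*c^2*n2* sqrt n2) > 1/(b^2* sqrt n2) \<longleftrightarrow> (a^2-c^2)*(cos t)^2 > a^2-b^2"
            "1/(a^2*c^2*n2* sqrt n2) < 1/(b^2* sqrt n2) \<longleftrightarrow> (a^2-c^2)*(cos t)^2 < a^2-b^2"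
  proof -
    have p1: "A*C*n2* sqrt n2 > 0" "B* sqrt n2 > 0" using A0 n2pos s0 by auto
    have "1/(A*C*n2* sqrt n2) > 1/(B* sqrt n2) \<longleftrightarrow> A*C*n2* sqrt n2 < B* sqrt n2"
      using p1 by (simp only: recip_less)
    also have "\<dots> \<longleftrightarrow> A*C*n2 < B" using s0 by (simp add: mult.assoc)
    also have "\<dots> \<longleftrightarrow> (A-C)*qc^2 > A-B" unfolding ACn sc by (simp add: algebra_simps)
    finally show "1/(a^2*c^2*n2* sqrt n2) > 1/(b^2* sqrt n2) \<longleftrightarrow> (a^2-c^2)*(cos t)^2 > a^2-b^2"
      unfolding A_def B_def C_def qc_def .
    have "1/(A*C*n2* sqrt n2) < 1/(B* sqrt n2) \<longleftrightarrow> A*C*n2* sqrt n2 > B* sqrt n2"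
      using p1 by (simp only: recip_less)
    also have "\<dots> \<longleftrightarrow> A*C*n2 > B" using s0 by (simp add: mult.assoc)
    also have "\<dots> \<longleftrightarrow> (A-C)*qc^2 < A-B" unfolding ACn sc by (simp add: algebra_simps)
    finally show "1/(a^2*c^2*n2* sqrt n2) < 1/(b^2* sqrt n2) \<longleftrightarrow> (a^2-c^2)*(cos t)^2 < a^2-b^2"
      unfolding A_def B_def C_def qc_def .
  qed
  show "(a^2-c^2)*(cos t)^2 > a^2-b^2 \<Longrightarrow>
           curvature_center a b c P (kappa2 a b c P) = astroida5 a b c t \<and>
           curvature_center a b c P (kappa1 a b c P) = ellipse8 a b c t"
  proof -
    assume h: "(a^2-c^2)*(cos t)^2 > a^2-b^2"
    then have "1/(a^2*c^2*n2* sqrt n2) > 1/(b^2* sqrt n2)" using cmp(1) by simp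
    then have "kappa2 a b c P = 1/(a^2*c^2*n2* sqrt n2)" "kappa1 a b c P = 1/(b^2* sqrt n2)"
      unfolding kap by simp_all
    then show ?thesis using cen_t cen_y by simp
  qed
  show "(a^2-c^2)*(cos t)^2 < a^2-b^2 \<Longrightarrow>
           curvature_center a b c P (kappa1 a b c P) = astroida5 a b c t \<and>
           curvature_center a b c P (kappa2 a b c P) = ellipse8 a b c t"
  proof -
    assume h: "(a^2-c^2)*(cos t)^2 < a^2-b^2"
    then have "1/(a^2*c^2*n2* sqrt n2) < 1/(b^2* sqrt n2)" using cmp(2) by simp
    then have "kappa1 a b c P = 1/(a^2*c^2*n2* sqrt n2)" "kappa2 a b c P = 1/(b^2* sqrt n2)"
      unfolding kap by simp_all
    then show ?thesis using cen_t cen_y by simp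
  qed
qed

lemma amgm_uniq:
  fixes t u :: real
  assumes t: "0 < t" "t < 1" and u: "0 \<le> u" "u \<le> 1"
    and g: "u^3/t^2 + (1-u)^3/(1-t)^2 = 1"
  shows "u = t"
proof -
  have ne: "t \<noteq> 0" "1 - t \<noteq> 0" "t \<noteq> 1" using t by auto
  define h1 where "h1 = (u - t)^2 * (u + 2*t)"
  define h2 where "h2 = ((1-u) - (1-t))^2 * ((1-u) + 2*(1-t))"
  have id: "h1/t^2 + h2/(1-t)^2 = u^3/t^2 + (1-u)^3/(1-t)^2 - 1"
    unfolding h1_def h2_def using ne
    by (simp add: field_simps) (simp add: algebra_simps power2_eq_square power3_eq_cube)
  have pp: "u + 2*t > 0" using t u by simp
  have h1: "h1 \<ge> 0" unfolding h1_def using pp by simp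
  have h2: "h2 \<ge> 0" unfolding h2_def using t u by simp
  have "h1/t^2 + h2/(1-t)^2 = 0" using id g by simp
  moreover have "h1/t^2 \<ge> 0" "h2/(1-t)^2 \<ge> 0" using h1 h2 by simp_all
  ultimately have "h1/t^2 = 0" by linarith
  then have "h1 = 0" using ne by simp
  then have "(u - t)^2 = 0" unfolding h1_def using pp by simp
  then show ?thesis by simp
qed

lemma c8:
  fixes a b c x y :: real
  assumes abc: "a > b" "b > c" "c > 0"
  shows "((\<exists>t\<in>{0..<2*pi}. x = (a^2 - b^2)/a * cos t \<and> y = (b^2 - c^2)/c * sin t) \<and>
          (\<exists>t\<in>{0..<2*pi}. x = (a^2-c^2)/a * cos t ^ 3 \<and> y = (a^2-c^2)/c * sin t ^ 3)) \<longleftrightarrow>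
         ((x = sqrt ((a^2 - b^2)^3 / (a^2*(a^2 - c^2))) \<or> x = - sqrt ((a^2 - b^2)^3 / (a^2*(a^2 - c^2)))) \<and>
          (y = sqrt ((b^2 - c^2)^3 / (c^2*(a^2 - c^2))) \<or> y = - sqrt ((b^2 - c^2)^3 / (c^2*(a^2 - c^2)))))"
proof -
  define A where "A = a^2"
  define B where "B = b^2"
  define C where "C = c^2"
  have pos: "a > 0" "b > 0" using abc by auto
  have C0: "C > 0" unfolding C_def using abc by simp
  have BC: "B > C" unfolding B_def C_def using abc by (simp add: power_strict_mono)
  have AB: "A > B" unfolding A_def B_def using abc by (simp add: power_strict_mono)
  have ne: "A - C \<noteq> 0" "A - B \<noteq> 0" "B - C \<noteq> 0" "A \<noteq> C" "A \<noteq> B" "B \<noteq> C" "A \<noteq> 0" "C \<noteq> 0"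
    using AB BC C0 by auto
  define u0 where "u0 = (A-B)/(A-C)"
  have om: "1 - u0 = (B-C)/(A-C)" unfolding u0_def using AB BC by (simp add: field_simps)
  have u0s: "0 < u0" "u0 < 1" unfolding u0_def using AB BC by auto
  have k1: "((a^2-c^2)/a)^2/((a^2 - b^2)/a)^2 = 1/u0^2"
    unfolding u0_def A_def B_def C_def using pos by (simp add: power_divide)
  have k2: "((a^2-c^2)/c)^2/((b^2 - c^2)/c)^2 = 1/(1-u0)^2"
    unfolding om A_def B_def C_def using abc by (simp add: power_divide)
  have g: "1/u0^2 * u0^3 + 1/(1-u0)^2 * (1-u0)^3 = 1"
    using u0s by (simp add: power2_eq_square power3_eq_cube)
  have s1: "((a^2-c^2)/a)^2 * u0^3 = (a^2 - b^2)^3 / (a^2*(a^2 - c^2))"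
  proof -
    have "((a^2-c^2)/a)^2 = (A-C)^2/A" unfolding A_def C_def by (simp add: power_divide)
    moreover have "(A-C)^2/A * u0^3 = (A-B)^3/(A*(A-C))" unfolding u0_def using ne
      by (simp add: field_simps) (simp add: algebra_simps power2_eq_square power3_eq_cube)
    ultimately show ?thesis unfolding A_def B_def C_def by simp
  qed
  have s2: "((a^2-c^2)/c)^2 * (1-u0)^3 = (b^2 - c^2)^3 / (c^2*(a^2 - c^2))"
  proof -
    have "((a^2-c^2)/c)^2 = (A-C)^2/C" unfolding A_def C_def by (simp add: power_divide)
    moreover have "(A-C)^2/C * (1-u0)^3 = (B-C)^3/(C*(A-C))" unfolding om using ne
      by (simp add: field_simps) (simp add: algebra_simps power2_eq_square power3_eq_cube)
    ultimately show ?thesis unfolding A_def B_def C_def by simp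
  qed
  have al: "(a^2-c^2)/a > 0" "(a^2-c^2)/c > 0" "(a^2 - b^2)/a > 0" "(b^2 - c^2)/c > 0"
    using AB BC pos abc unfolding A_def B_def C_def by simp_all
  show ?thesis
    unfolding s1[symmetric] s2[symmetric]
  proof (rule L_int[OF al])
    show "0 \<le> u0" "u0 \<le> 1" using u0s by simp_all
    show "((a^2-c^2)/a)^2/((a^2 - b^2)/a)^2 * u0^3 + ((a^2-c^2)/c)^2/((b^2 - c^2)/c)^2 * (1-u0)^3 = 1"
      unfolding k1 k2 by (rule g)
    fix u assume u: "0 \<le> u" "u \<le> 1" "((a^2-c^2)/a)^2/((a^2 - b^2)/a)^2 * u^3 + ((a^2-c^2)/c)^2/((b^2 - c^2)/c)^2 * (1-u)^3 = 1"
    show "u = u0"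
      by (rule amgm_uniq) (use u u0s k1 k2 in auto)
  qed
qed

lemma dcos3: "((\<lambda>t. K * cos t ^ 3) has_vector_derivative K * (3 * cos t ^ 2 * (- sin t))) (at t)" for K t :: real
  unfolding has_real_derivative_iff_has_vector_derivative[symmetric]
  by (auto intro!: derivative_eq_intros)
lemma dsin3: "((\<lambda>t. K * sin t ^ 3) has_vector_derivative K * (3 * sin t ^ 2 * cos t)) (at t)" for K t :: real
  unfolding has_real_derivative_iff_has_vector_derivative[symmetric]
  by (auto intro!: derivative_eq_intros)
lemma dcos1: "((\<lambda>t. K * cos t) has_vector_derivative K * (- sin t)) (at t)" for K t :: real
  unfolding has_real_derivative_iff_has_vector_derivative[symmetric]
  by (auto intro!: derivative_eq_intros)
lemma dsin1: "((\<lambda>t. K * sin t) has_vector_derivative K * cos t) (at t)" for K t :: real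
  unfolding has_real_derivative_iff_has_vector_derivative[symmetric]
  by (auto intro!: derivative_eq_intros)

lemma deriv_ast5:
  "(astroida5 a b c has_vector_derivative
     ((a^2 - c^2)/a * (3 * cos t ^ 2 * (- sin t)), 0, (a^2 - c^2)/c * (3 * sin t ^ 2 * cos t))) (at t)"
proof -
  note d1 = dcos3[of "(a^2 - c^2)/a" t]
  note d3 = dsin3[of "(a^2 - c^2)/c" t]
  have e: "astroida5 a b c = (\<lambda>t. ((a^2 - c^2)/a * cos t ^ 3, 0, (a^2 - c^2)/c * sin t ^ 3))"
    by (rule ext) (simp add: astroida5_def)
  show ?thesis unfolding e
    by (intro has_vector_derivative_Pair d1 d3 has_vector_derivative_const)
qed

lemma deriv_ell8:
  "(ellipse8 a b c has_vector_derivative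
     ((a^2 - b^2)/a * (- sin t), 0, (b^2 - c^2)/c * cos t)) (at t)"
proof -
  note d1 = dcos1[of "(a^2 - b^2)/a" t]
  note d3 = dsin1[of "(b^2 - c^2)/c" t]
  have e: "ellipse8 a b c = (\<lambda>t. ((a^2 - b^2)/a * cos t, 0, (b^2 - c^2)/c * sin t))"
    by (rule ext) (simp add: ellipse8_def)
  show ?thesis unfolding e
    by (intro has_vector_derivative_Pair d1 d3 has_vector_derivative_const)
qed

lemma p32: "v \<noteq> 0 \<Longrightarrow> v^3/v^2 = v" for v :: real
  by (simp add: power2_eq_square power3_eq_cube)

lemma cube_back: "K > 0 \<Longrightarrow> v > 0 \<Longrightarrow> z^2 = K^2* v^3 \<Longrightarrow> K*(z/(K* v))^3 = z" for K v z :: real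
proof -
  assume h: "K > 0" "v > 0" "z^2 = K^2* v^3"
  have "K*(z/(K* v))^3 = z * z^2/(K^2* v^3)" using h(1,2) by (simp add: power_divide power3_eq_cube power2_eq_square field_simps)
  also have "\<dots> = z" using h by simp
  finally show ?thesis .
qed

lemma tangency8:
  fixes a b c :: real
  assumes abc: "a > b" "b > c" "c > 0"
    and p: "p \<in> pm_xz (sqrt ((a^2 - b^2)^3 / (a^2*(a^2 - c^2)))) (sqrt ((b^2 - c^2)^3 / (c^2*(a^2 - c^2))))"
  shows "tangent_at (astroida5 a b c) (ellipse8 a b c) p"
proof -
  define A where "A = a^2"
  define B where "B = b^2"
  define C where "C = c^2"
  have pos: "a > 0" "b > 0" using abc by auto
  have C0: "C > 0" unfolding C_def using abc by simp
  have BC: "B > C" unfolding B_def C_def using abc by (simp add: power_strict_mono)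
  have AB: "A > B" unfolding A_def B_def using abc by (simp add: power_strict_mono)
  have ne: "A - C \<noteq> 0" "A - B \<noteq> 0" "B - C \<noteq> 0" "A \<noteq> C" "A \<noteq> B" "B \<noteq> C" "A \<noteq> 0" "C \<noteq> 0" "a \<noteq> 0" "c \<noteq> 0"
    using AB BC C0 abc by auto
  define u0 where "u0 = (A-B)/(A-C)"
  have om: "1 - u0 = (B-C)/(A-C)" unfolding u0_def using AB BC by (simp add: field_simps)
  have u0s: "0 < u0" "u0 < 1" unfolding u0_def using AB BC by auto
  define al where "al = (A-C)/a"
  define be where "be = (A-C)/c"
  have al0: "al > 0" "be > 0" unfolding al_def be_def using AB BC C0 abc by auto
  have R1: "(a^2 - b^2)^3 / (a^2*(a^2 - c^2)) = al^2 * u0^3"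
    unfolding al_def u0_def A_def[symmetric] B_def[symmetric] C_def[symmetric] using ne
    by (simp add: field_simps) (simp add: A_def algebra_simps power2_eq_square power3_eq_cube)
  have R2: "(b^2 - c^2)^3 / (c^2*(a^2 - c^2)) = be^2 * (1-u0)^3"
    unfolding be_def om A_def[symmetric] B_def[symmetric] C_def[symmetric] using ne
    by (simp add: field_simps) (simp add: C_def algebra_simps power2_eq_square power3_eq_cube)
  have p1: "(a^2 - b^2)/a = al * u0" unfolding al_def u0_def A_def[symmetric] B_def[symmetric] C_def[symmetric]
    using ne by (simp add: field_simps)
  have p2: "(b^2 - c^2)/c = be * (1-u0)" unfolding be_def om A_def[symmetric] B_def[symmetric] C_def[symmetric]
    using ne by (simp add: field_simps)
  have a5: "(a^2 - c^2)/a = al" "(a^2 - c^2)/c = be" unfolding al_def be_def A_def C_def by simp_all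
  obtain x z where pz: "p = (x, 0, z)" "x^2 = al^2*u0^3" "z^2 = be^2*(1-u0)^3"
  proof -
    have nn: "al^2*u0^3 \<ge> 0" "be^2*(1-u0)^3 \<ge> 0" using u0s by simp_all
    from p obtain x z where "p = (x,0,z)" "x = sqrt (al^2*u0^3) \<or> x = - sqrt (al^2*u0^3)"
        "z = sqrt (be^2*(1-u0)^3) \<or> z = - sqrt (be^2*(1-u0)^3)"
      unfolding R1 R2 pm_xz_def by auto
    then show ?thesis using that nn by auto
  qed
  define cx where "cx = x/(al*u0)"
  define sz where "sz = z/(be*(1-u0))"
  have cx2: "cx^2 = u0" unfolding cx_def using pz(2) al0 u0s by (simp add: power_divide power_mult_distrib p32)
  have sz2: "sz^2 = 1 - u0" unfolding sz_def using pz(3) al0 u0s by (simp add: power_divide power_mult_distrib p32)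
  obtain t where t: "0 \<le> t" "t < 2*pi" "cx = cos t" "sz = sin t"
    using sincos_total_2pi[of cx sz] cx2 sz2 by auto
  have ast: "astroida5 a b c t = p"
  proof -
    have "al * cx^3 = x" unfolding cx_def using pz(2) al0 u0s by (intro cube_back) auto
    moreover have "be * sz^3 = z" unfolding sz_def using pz(3) al0 u0s by (intro cube_back) auto
    ultimately show ?thesis unfolding astroida5_def a5 pz(1) t(3,4)[symmetric] by simp
  qed
  have ell: "ellipse8 a b c t = p"
  proof -
    have "al * u0 * cx = x" unfolding cx_def using al0 u0s by simp
    moreover have "be * (1-u0) * sz = z" unfolding sz_def using al0 u0s by simp
    ultimately show ?thesis unfolding ellipse8_def p1 p2 pz(1) t(3,4)[symmetric] by simp
  qed
  define w where "w = ((a^2 - b^2)/a * (- sin t), 0::real, (b^2 - c^2)/c * cos t)"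
  define u where "u = ((a^2 - c^2)/a * (3 * cos t ^ 2 * (- sin t)), 0::real, (a^2 - c^2)/c * (3 * sin t ^ 2 * cos t))"
  have uw: "u = 3 *\<^sub>R w"
    unfolding u_def w_def a5 p1 p2 using cx2 sz2 t(3,4) by simp
  have sn0: "sin t \<noteq> 0" using sz2 t(4) u0s by auto
  have w0: "w \<noteq> 0" unfolding w_def p1 using sn0 al0 u0s by (simp add: zero_prod_def)
  have u0': "u \<noteq> 0" using uw w0 by simp
  have du: "(astroida5 a b c has_vector_derivative u) (at t)" unfolding u_def by (rule deriv_ast5)
  have dw: "(ellipse8 a b c has_vector_derivative w) (at t)" unfolding w_def by (rule deriv_ell8)
  show ?thesis unfolding tangent_at_def
    apply (rule exI[of _ t], rule exI[of _ t], rule exI[of _ u], rule exI[of _ w])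
    using t ast ell du dw u0' w0 uw by auto
qed

lemma cube_less_iff: "0 \<le> x \<Longrightarrow> 0 \<le> y \<Longrightarrow> x^3 < y^3 \<longleftrightarrow> x < y" for x y :: real
  by (metis not_le power_mono_iff zero_less_numeral)

lemma sqrt_lt_abs: "sqrt R < \<bar>y\<bar> \<longleftrightarrow> R < y^2" "\<bar>y\<bar> < sqrt R \<longleftrightarrow> y^2 < R" for R y :: real
  by (simp_all flip: real_sqrt_abs)

lemma sheets8:
  fixes a b c :: real
  assumes abc: "a > b" "b > c" "c > 0"
  defines "x6 \<equiv> sqrt ((a^2 - b^2)^3 / (a^2*(a^2 - c^2)))"
  shows "{p \<in> curve (astroida5 a b c). \<bar>fst p\<bar> > x6} \<subseteq> caustic_sheet2 a b c"
    and "{p \<in> curve (astroida5 a b c). \<bar>fst p\<bar> < x6} \<subseteq> caustic_sheet1 a b c"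
    and "{p \<in> curve (ellipse8 a b c). \<bar>fst p\<bar> > x6} \<subseteq> caustic_sheet1 a b c"
    and "{p \<in> curve (ellipse8 a b c). \<bar>fst p\<bar> < x6} \<subseteq> caustic_sheet2 a b c"
proof -
  define A where "A = a^2"
  define B where "B = b^2"
  define C where "C = c^2"
  have pos: "a > 0" "b > 0" using abc by auto
  have C0: "C > 0" unfolding C_def using abc by simp
  have BC: "B > C" unfolding B_def C_def using abc by (simp add: power_strict_mono)
  have AB: "A > B" unfolding A_def B_def using abc by (simp add: power_strict_mono)
  have ne: "A - C \<noteq> 0" "A - B \<noteq> 0" "B - C \<noteq> 0" "A \<noteq> C" "A \<noteq> B" "B \<noteq> C" "A \<noteq> 0" "C \<noteq> 0" "a \<noteq> 0" "c \<noteq> 0"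
    using AB BC C0 abc by auto
  define u0 where "u0 = (A-B)/(A-C)"
  have u0s: "0 < u0" "u0 < 1" unfolding u0_def using AB BC by auto
  define al where "al = (A-C)/a"
  have al0: "al > 0" unfolding al_def using AB BC C0 abc by auto
  have R1: "(a^2 - b^2)^3 / (a^2*(a^2 - c^2)) = al^2 * u0^3"
    unfolding al_def u0_def A_def[symmetric] B_def[symmetric] C_def[symmetric] using ne
    by (simp add: field_simps) (simp add: A_def algebra_simps power2_eq_square power3_eq_cube)
  have p1: "(a^2 - b^2)/a = al * u0" unfolding al_def u0_def A_def[symmetric] B_def[symmetric] C_def[symmetric]
    using ne by (simp add: field_simps)
  have a5: "(a^2 - c^2)/a = al" unfolding al_def A_def C_def by simp_all
  have cmpu: "\<And>t. u0 < (cos t)^2 \<longleftrightarrow> (a^2-c^2)*(cos t)^2 > a^2-b^2"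
             "\<And>t. u0 > (cos t)^2 \<longleftrightarrow> (a^2-c^2)*(cos t)^2 < a^2-b^2"
    unfolding u0_def A_def[symmetric] B_def[symmetric] C_def[symmetric] using AB BC
    by (simp_all add: field_simps)
  have fa: "\<And>t. \<bar>fst (astroida5 a b c t)\<bar> > x6 \<longleftrightarrow> u0 < (cos t)^2"
            "\<And>t. \<bar>fst (astroida5 a b c t)\<bar> < x6 \<longleftrightarrow> u0 > (cos t)^2"
  proof -
    fix t
    have e: "(al * cos t ^ 3)^2 = al^2 * ((cos t)^2)^3" by (simp add: power_mult_distrib flip: power_mult)
    show "\<bar>fst (astroida5 a b c t)\<bar> > x6 \<longleftrightarrow> u0 < (cos t)^2"
      unfolding x6_def R1 astroida5_def a5 fst_conv sqrt_lt_abs e using al0 u0s cube_less_iff[of u0 "(cos t)^2"]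
      by simp
    show "\<bar>fst (astroida5 a b c t)\<bar> < x6 \<longleftrightarrow> u0 > (cos t)^2"
      unfolding x6_def R1 astroida5_def a5 fst_conv sqrt_lt_abs e using al0 u0s cube_less_iff[of "(cos t)^2" u0]
      by simp
  qed
  have fe: "\<And>t. \<bar>fst (ellipse8 a b c t)\<bar> > x6 \<longleftrightarrow> u0 < (cos t)^2"
            "\<And>t. \<bar>fst (ellipse8 a b c t)\<bar> < x6 \<longleftrightarrow> u0 > (cos t)^2"
  proof -
    fix t
    have e: "(al * u0 * cos t)^2 = (al^2 * u0^2) * (cos t)^2" "al^2 * u0^3 = (al^2 * u0^2) * u0"
      by (simp_all add: power_mult_distrib power2_eq_square power3_eq_cube)
    have k: "al^2 * u0^2 > 0" using al0 u0s by simp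
    show "\<bar>fst (ellipse8 a b c t)\<bar> > x6 \<longleftrightarrow> u0 < (cos t)^2"
      unfolding x6_def R1 ellipse8_def p1 fst_conv sqrt_lt_abs e by (rule mult_less_cancel_left_pos[OF k])
    show "\<bar>fst (ellipse8 a b c t)\<bar> < x6 \<longleftrightarrow> u0 > (cos t)^2"
      unfolding x6_def R1 ellipse8_def p1 fst_conv sqrt_lt_abs e by (rule mult_less_cancel_left_pos[OF k])
  qed
  note sf = sheet_facts[OF abc]
  show "{p \<in> curve (astroida5 a b c). \<bar>fst p\<bar> > x6} \<subseteq> caustic_sheet2 a b c"
  proof
    fix p assume "p \<in> {p \<in> curve (astroida5 a b c). \<bar>fst p\<bar> > x6}"
    then obtain t where t: "p = astroida5 a b c t" "\<bar>fst (astroida5 a b c t)\<bar> > x6" unfolding curve_def by auto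
    then have "(a^2-c^2)*(cos t)^2 > a^2-b^2" using fa cmpu by simp
    then have eq: "curvature_center a b c (a * cos t, 0::real, -c * sin t) (kappa2 a b c (a * cos t, 0::real, -c * sin t)) = astroida5 a b c t" using sf(2)[of t] by blast
    show "p \<in> caustic_sheet2 a b c" unfolding caustic_sheet2_def t(1)
      by (rule CollectI, rule exI[of _ "(a * cos t, 0::real, -c * sin t)"]) (use eq sf(1)[of t] in auto)
  qed
  show "{p \<in> curve (astroida5 a b c). \<bar>fst p\<bar> < x6} \<subseteq> caustic_sheet1 a b c"
  proof
    fix p assume "p \<in> {p \<in> curve (astroida5 a b c). \<bar>fst p\<bar> < x6}"
    then obtain t where t: "p = astroida5 a b c t" "\<bar>fst (astroida5 a b c t)\<bar> < x6" unfolding curve_def by auto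
    then have "(a^2-c^2)*(cos t)^2 < a^2-b^2" using fa cmpu by simp
    then have eq: "curvature_center a b c (a * cos t, 0::real, -c * sin t) (kappa1 a b c (a * cos t, 0::real, -c * sin t)) = astroida5 a b c t" using sf(3)[of t] by blast
    show "p \<in> caustic_sheet1 a b c" unfolding caustic_sheet1_def t(1)
      by (rule CollectI, rule exI[of _ "(a * cos t, 0::real, -c * sin t)"]) (use eq sf(1)[of t] in auto)
  qed
  show "{p \<in> curve (ellipse8 a b c). \<bar>fst p\<bar> > x6} \<subseteq> caustic_sheet1 a b c"
  proof
    fix p assume "p \<in> {p \<in> curve (ellipse8 a b c). \<bar>fst p\<bar> > x6}"
    then obtain t where t: "p = ellipse8 a b c t" "\<bar>fst (ellipse8 a b c t)\<bar> > x6" unfolding curve_def by auto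
    then have "(a^2-c^2)*(cos t)^2 > a^2-b^2" using fe cmpu by simp
    then have eq: "curvature_center a b c (a * cos t, 0::real, -c * sin t) (kappa1 a b c (a * cos t, 0::real, -c * sin t)) = ellipse8 a b c t" using sf(2)[of t] by blast
    show "p \<in> caustic_sheet1 a b c" unfolding caustic_sheet1_def t(1)
      by (rule CollectI, rule exI[of _ "(a * cos t, 0::real, -c * sin t)"]) (use eq sf(1)[of t] in auto)
  qed
  show "{p \<in> curve (ellipse8 a b c). \<bar>fst p\<bar> < x6} \<subseteq> caustic_sheet2 a b c"
  proof
    fix p assume "p \<in> {p \<in> curve (ellipse8 a b c). \<bar>fst p\<bar> < x6}"
    then obtain t where t: "p = ellipse8 a b c t" "\<bar>fst (ellipse8 a b c t)\<bar> < x6" unfolding curve_def by auto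
    then have "(a^2-c^2)*(cos t)^2 < a^2-b^2" using fe cmpu by simp
    then have eq: "curvature_center a b c (a * cos t, 0::real, -c * sin t) (kappa2 a b c (a * cos t, 0::real, -c * sin t)) = ellipse8 a b c t" using sf(3)[of t] by blast
    show "p \<in> caustic_sheet2 a b c" unfolding caustic_sheet2_def t(1)
      by (rule CollectI, rule exI[of _ "(a * cos t, 0::real, -c * sin t)"]) (use eq sf(1)[of t] in auto)
  qed
qed

lemma sign3:
  fixes E X Y p q K :: real
  assumes "E - 1 = p*K" "X - Y = q*K" "p > 0" "q > 0"
  shows "(E = 1 \<longleftrightarrow> X = Y) \<and> (E < 1 \<longleftrightarrow> X < Y) \<and> (E > 1 \<longleftrightarrow> X > Y)"
proof -
  have 1: "E = 1 \<longleftrightarrow> K = 0" "X = Y \<longleftrightarrow> K = 0" using assms by auto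
  have 2: "E < 1 \<longleftrightarrow> K < 0" using assms(1,3) by (metis diff_less_0_iff_less mult_less_0_iff not_less_iff_gr_or_eq)
  have 3: "X < Y \<longleftrightarrow> K < 0" using assms(2,4) by (metis diff_less_0_iff_less mult_less_0_iff not_less_iff_gr_or_eq)
  have 4: "E > 1 \<longleftrightarrow> K > 0" using assms(1,3) by (metis diff_gt_0_iff_gt zero_less_mult_iff not_less_iff_gr_or_eq)
  have 5: "X > Y \<longleftrightarrow> K > 0" using assms(2,4) by (metis diff_gt_0_iff_gt zero_less_mult_iff not_less_iff_gr_or_eq)
  show ?thesis using 1 2 3 4 5 by simp
qed

lemma frac8: "A \<noteq> 0 \<Longrightarrow> C \<noteq> 0 \<Longrightarrow> D \<noteq> 0 \<Longrightarrow>
  U/(A*D)/A + V/(C*D)/C - 1 = (C^2*U + A^2*V - A^2*C^2*D)/(A^2*C^2*D)" for A C D U V :: real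
  by (simp add: field_simps power2_eq_square)

lemma ellq8:
  fixes a b c :: real
  assumes abc: "a > b" "b > c" "c > 0"
    and p: "p \<in> pm_xz (sqrt ((a^2 - b^2)^3 / (a^2*(a^2 - c^2)))) (sqrt ((b^2 - c^2)^3 / (c^2*(a^2 - c^2))))"
  shows "(ellq a b c p = 1 \<longleftrightarrow> 1/a^2 + 1/c^2 = 3/b^2)
            \<and> (ellq a b c p < 1 \<longleftrightarrow> 1/a^2 + 1/c^2 < 3/b^2)
            \<and> (ellq a b c p > 1 \<longleftrightarrow> 1/a^2 + 1/c^2 > 3/b^2)"
proof -
  define A where "A = a^2"
  define B where "B = b^2"
  define C where "C = c^2"
  have C0: "C > 0" unfolding C_def using abc by simp
  have BC: "B > C" unfolding B_def C_def using abc by (simp add: power_strict_mono)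
  have AB: "A > B" unfolding A_def B_def using abc by (simp add: power_strict_mono)
  have ne: "A - C \<noteq> 0" "A - B \<noteq> 0" "B - C \<noteq> 0" "A \<noteq> C" "A \<noteq> B" "B \<noteq> C" "A \<noteq> 0" "C \<noteq> 0" "B \<noteq> 0"
    using AB BC C0 abc by auto
  have nn: "(a^2 - b^2)^3 / (a^2*(a^2 - c^2)) \<ge> 0" "(b^2 - c^2)^3 / (c^2*(a^2 - c^2)) \<ge> 0"
    unfolding A_def[symmetric] B_def[symmetric] C_def[symmetric] using AB BC C0 by simp_all
  have E: "ellq a b c p = (A-B)^3/(A*(A-C))/A + (B-C)^3/(C*(A-C))/C"
    using p nn unfolding pm_xz_def ellq_def A_def B_def C_def by auto
  define K where "K = A*B + B*C - 3*A*C"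
  have poly: "C^2*(A-B)^3 + A^2*(B-C)^3 - A^2*C^2*(A-C) = B^2*(A-C)*K"
    unfolding K_def by (simp add: algebra_simps power2_eq_square power3_eq_cube)
  have "(A-B)^3/(A*(A-C))/A + (B-C)^3/(C*(A-C))/C - 1 = (C^2*(A-B)^3 + A^2*(B-C)^3 - A^2*C^2*(A-C))/(A^2*C^2*(A-C))"
    using ne by (intro frac8) auto
  also have "\<dots> = B^2/(A^2*C^2) * K" unfolding poly using ne by (simp add: field_simps power2_eq_square)
  finally have e1: "ellq a b c p - 1 = B^2/(A^2*C^2) * K" unfolding E .
  have e2: "(1/a^2 + 1/c^2) - 3/b^2 = 1/(A*B*C) * K"
    unfolding K_def A_def[symmetric] B_def[symmetric] C_def[symmetric] using ne by (simp add: field_simps)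
  show ?thesis by (rule sign3[OF e1 e2]) (use ne AB BC C0 in simp_all)
qed

lemma poly9: "C^2*(A-B)^3*(A+B-2*C)^3 + B^2*(A-C)^3*(2*B-A-C)^3 - B^2*C^2*(B-C)*(2*A-B-C)^3
   = (2*B^2+2*C^2-A*B-A*C-2*B*C)*A*(B-C)*(A^2-2*A*(B+C)+3*B*C)^2" for A B C :: real
  by (simp add: algebra_simps power2_eq_square power3_eq_cube)

lemma frac9: "B \<noteq> 0 \<Longrightarrow> C \<noteq> 0 \<Longrightarrow> D \<noteq> 0 \<Longrightarrow> W \<noteq> 0 \<Longrightarrow>
  U/(B*D*W)/B + V/(C*D*W)/C - 1 = (C^2*U + B^2*V - B^2*C^2*D*W)/(B^2*C^2*D*W)" for B C D W U V :: real
  by (simp add: field_simps power2_eq_square)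

lemma f9_neg:
  fixes A B C :: real
  assumes "A > B" "B > C" "C > 0" "A + C \<le> 2*B"
  shows "A^2-2*A*(B+C)+3*B*C < 0"
proof -
  have split: "A^2-2*A*(B+C)+3*B*C = (A-B)*(A-2*B+C) + (A*B - 3*A*C + 4*B*C - 2*B^2)"
    by (simp add: algebra_simps power2_eq_square)
  have t1: "(A-B)*(A-2*B+C) \<le> 0" using assms by (intro mult_nonneg_nonpos) auto
  have t2: "A*B - 3*A*C + 4*B*C - 2*B^2 < 0"
  proof (cases "B \<ge> 3*C")
    case True
    have e: "A*B - 3*A*C + 4*B*C - 2*B^2 = (A-2*B+C)*(B-3*C) + 3*C*(C - B)"
      by (simp add: algebra_simps power2_eq_square)
    have "(A-2*B+C)*(B-3*C) \<le> 0" using assms True by (intro mult_nonpos_nonneg) auto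
    moreover have "3*C*(C - B) < 0" using assms by (simp add: mult_pos_neg)
    ultimately show ?thesis unfolding e by linarith
  next
    case False
    have e: "A*B - 3*A*C + 4*B*C - 2*B^2 = (A-B)*(B-3*C) + B*(C - B)"
      by (simp add: algebra_simps power2_eq_square)
    have "(A-B)*(B-3*C) < 0" using assms False by (intro mult_pos_neg) auto
    moreover have "B*(C - B) < 0" using assms by (simp add: mult_pos_neg)
    ultimately show ?thesis unfolding e by linarith
  qed
  show ?thesis unfolding split using t1 t2 by linarith
qed

lemma ellq9:
  fixes a b c :: real
  assumes abc: "a > b" "b > c" "c > 0" "a^2 + c^2 \<le> 2*b^2"
    and p: "p \<in> pm_yz (sqrt ((b^2 - a^2)^3*(2*c^2 - b^2 - a^2)^3 / (b^2*(c^2 - b^2)*(b^2 + c^2 - 2*a^2)^3)))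
                       (sqrt ((c^2 - a^2)^3*(2*b^2 - c^2 - a^2)^3 / (c^2*(b^2 - c^2)*(b^2 + c^2 - 2*a^2)^3)))"
  shows "(ellq a b c p = 1 \<longleftrightarrow> 2*b^4 + 2*c^4 - a^2*b^2 - a^2*c^2 - 2*b^2*c^2 = 0)
       \<and> (ellq a b c p < 1 \<longleftrightarrow> 2*b^4 + 2*c^4 - a^2*b^2 - a^2*c^2 - 2*b^2*c^2 < 0)
       \<and> (ellq a b c p > 1 \<longleftrightarrow> 2*b^4 + 2*c^4 - a^2*b^2 - a^2*c^2 - 2*b^2*c^2 > 0)"
proof -
  define A where "A = a^2"
  define B where "B = b^2"
  define C where "C = c^2"
  have C0: "C > 0" unfolding C_def using abc by simp
  have BC: "B > C" unfolding B_def C_def using abc by (simp add: power_strict_mono)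
  have AB: "A > B" unfolding A_def B_def using abc by (simp add: power_strict_mono)
  have ACB: "A + C \<le> 2*B" unfolding A_def B_def C_def using abc by simp
  have ne: "B \<noteq> 0" "C \<noteq> 0" "B - C \<noteq> 0" "(2*A-B-C)^3 \<noteq> 0" using AB BC C0 by auto
  have r1: "(b^2 - a^2)^3*(2*c^2 - b^2 - a^2)^3 / (b^2*(c^2 - b^2)*(b^2 + c^2 - 2*a^2)^3)
      = (A-B)^3*(A+B-2*C)^3/(B*(B-C)*(2*A-B-C)^3)"
  proof -
    have "(A-B)^3*(A+B-2*C)^3/(B*(B-C)*(2*A-B-C)^3) = (-(A-B))^3*(-(A+B-2*C))^3/(B*(-(B-C))*(-(2*A-B-C))^3)"
      unfolding flip4 by simp
    also have "\<dots> = (B-A)^3*(2*C-B-A)^3/(B*(C-B)*(B+C-2*A)^3)"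
      by (simp add: algebra_simps)
    finally show ?thesis unfolding A_def B_def C_def by simp
  qed
  have r2: "(c^2 - a^2)^3*(2*b^2 - c^2 - a^2)^3 / (c^2*(b^2 - c^2)*(b^2 + c^2 - 2*a^2)^3)
      = (A-C)^3*(2*B-A-C)^3/(C*(B-C)*(2*A-B-C)^3)"
  proof -
    have "(A-C)^3*(2*B-A-C)^3/(C*(B-C)*(2*A-B-C)^3) = (-(A-C))^3*(2*B-A-C)^3/(C*(B-C)*(-(2*A-B-C))^3)"
      unfolding flip2 by simp
    also have "\<dots> = (C-A)^3*(2*B-C-A)^3/(C*(B-C)*(B+C-2*A)^3)"
      by (simp add: algebra_simps)
    finally show ?thesis unfolding A_def B_def C_def by simp
  qed
  have nn: "(A-B)^3*(A+B-2*C)^3/(B*(B-C)*(2*A-B-C)^3) \<ge> 0" "(A-C)^3*(2*B-A-C)^3/(C*(B-C)*(2*A-B-C)^3) \<ge> 0"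
    using AB BC C0 ACB by simp_all
  have E: "ellq a b c p = (A-B)^3*(A+B-2*C)^3/(B*(B-C)*(2*A-B-C)^3)/B + (A-C)^3*(2*B-A-C)^3/(C*(B-C)*(2*A-B-C)^3)/C"
    using p nn unfolding r1 r2 pm_yz_def ellq_def A_def B_def C_def by auto
  define f where "f = A^2-2*A*(B+C)+3*B*C"
  have f0: "f < 0" unfolding f_def using f9_neg AB BC C0 ACB by blast
  define S where "S = 2*B^2+2*C^2-A*B-A*C-2*B*C"
  have "ellq a b c p - 1 = (C^2*((A-B)^3*(A+B-2*C)^3) + B^2*((A-C)^3*(2*B-A-C)^3) - B^2*C^2*(B-C)*(2*A-B-C)^3)/(B^2*C^2*(B-C)*(2*A-B-C)^3)"
    unfolding E using ne by (intro frac9) auto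
  also have "\<dots> = S*A*(B-C)*f^2/(B^2*C^2*(B-C)*(2*A-B-C)^3)"
    using poly9[of C A B] unfolding S_def f_def by (simp add: mult.assoc)
  also have "\<dots> = (A*f^2/(B^2*C^2*(2*A-B-C)^3)) * S" using ne by (simp add: field_simps)
  finally have e1: "ellq a b c p - 1 = (A*f^2/(B^2*C^2*(2*A-B-C)^3)) * S" .
  have e2: "(2*b^4 + 2*c^4 - a^2*b^2 - a^2*c^2 - 2*b^2*c^2) - 0 = 1 * S"
    unfolding S_def A_def B_def C_def by (simp add: power2_eq_square power4_eq_xxxx)
  have pp: "A*f^2/(B^2*C^2*(2*A-B-C)^3) > 0" using f0 AB BC C0 by simp
  show ?thesis using sign3[OF e1 e2 pp] by simp
qed

lemma ell_fun:
  "ellipse1 a b c = (\<lambda>t. (a * cos t, b * sin t, 0))"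
  "ellipse2 a b c = (\<lambda>t. (a * cos t, 0, c * sin t))"
  "ellipse3 a b c = (\<lambda>t. (0, b * cos t, c * sin t))"
  "astroida4 a b c = (\<lambda>t. ((a^2 - b^2)/a * cos t ^ 3, (a^2 - b^2)/b * sin t ^ 3, 0))"
  "astroida5 a b c = (\<lambda>t. ((a^2 - c^2)/a * cos t ^ 3, 0, (a^2 - c^2)/c * sin t ^ 3))"
  "astroida6 a b c = (\<lambda>t. (0, (b^2 - c^2)/b * cos t ^ 3, (b^2 - c^2)/c * sin t ^ 3))"
  "ellipse7 a b c = (\<lambda>t. ((a^2 - c^2)/a * cos t, (b^2 - c^2)/b * sin t, 0))"
  "ellipse8 a b c = (\<lambda>t. ((a^2 - b^2)/a * cos t, 0, (b^2 - c^2)/c * sin t))"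
  "ellipse9 a b c = (\<lambda>t. (0, (a^2 - b^2)/b * cos t, (a^2 - c^2)/c * sin t))"
  by (simp_all add: fun_eq_iff ellipse1_def ellipse2_def ellipse3_def astroida4_def astroida5_def
      astroida6_def ellipse7_def ellipse8_def ellipse9_def)

lemma part4:
  fixes a b c :: real
  assumes abc: "a > b" "b > c" "c > 0"
  shows "(let xs2 = a^2*(a^2 - c^2)^2*(2*b^2 - c^2) / ((a^2 - b^2)*(2*a^2*b^2 - a^2*c^2 - b^2*c^2));
         ys2 = b^2*(b^2 - c^2)^2*(2*a^2 - c^2) / ((b^2 - a^2)*(2*a^2*b^2 - b^2*c^2 - a^2*c^2))
     in curve (ellipse1 a b c) \<inter> curve (ellipse7 a b c) = {}
        \<and> (\<forall>x y :: complex.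
              (x^2 / (complex_of_real a)^2 + y^2 / (complex_of_real b)^2 = 1
               \<and> (complex_of_real a)^2 * x^2 / (complex_of_real (a^2 - c^2))^2
                 + (complex_of_real b)^2 * y^2 / (complex_of_real (b^2 - c^2))^2 = 1)
              \<longleftrightarrow> (x^2 = complex_of_real xs2 \<and> y^2 = complex_of_real ys2))
        \<and> ys2 < 0)"
proof -
  define xs2 where "xs2 = a^2*(a^2 - c^2)^2*(2*b^2 - c^2) / ((a^2 - b^2)*(2*a^2*b^2 - a^2*c^2 - b^2*c^2))"
  define ys2 where "ys2 = b^2*(b^2 - c^2)^2*(2*a^2 - c^2) / ((b^2 - a^2)*(2*a^2*b^2 - b^2*c^2 - a^2*c^2))"
  define A where "A = a^2"
  define B where "B = b^2"
  define C where "C = c^2"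
  have pos: "a > 0" "b > 0" using abc by auto
  have C0: "C > 0" unfolding C_def using abc by simp
  have BC: "B > C" unfolding B_def C_def using abc by (simp add: power_strict_mono)
  have AB: "A > B" unfolding A_def B_def using abc by (simp add: power_strict_mono)
  have k: "2*A*B - A*C - B*C > 0"
  proof -
    have "A*B > A*C" "A*B > B*C" using AB BC C0 by simp_all
    then show ?thesis by linarith
  qed
  have ys_neg: "ys2 < 0"
  proof -
    have "B*(B-C)^2*(2*A-C) > 0" using AB BC C0 by simp
    moreover have "(B-A)*(2*A*B - B*C - A*C) < 0" using AB k by (intro mult_neg_pos) linarith+
    ultimately show ?thesis unfolding ys2_def A_def[symmetric] B_def[symmetric] C_def[symmetric]
      by (simp add: divide_pos_neg)
  qed
  have empty: "curve (ellipse1 a b c) \<inter> curve (ellipse7 a b c) = {}"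
  proof (rule ccontr)
    assume "curve (ellipse1 a b c) \<inter> curve (ellipse7 a b c) \<noteq> {}"
    then obtain x y z where P: "(x,y,z) \<in> curve (ellipse1 a b c)" "(x,y,z) \<in> curve (ellipse7 a b c)" by auto
    have al: "(a^2 - c^2)/a > 0" "(b^2 - c^2)/b > 0" using AB BC C0 pos unfolding A_def B_def C_def by auto
    from P have "(x/a)^2 + (y/b)^2 = 1" "(x/((a^2 - c^2)/a))^2 + (y/((b^2 - c^2)/b))^2 = 1"
      unfolding ell_fun mem_curve_xy L_ell[OF pos] L_ell[OF al] by auto
    then have "y^2 = ys2" using c4_lin[OF abc, of "x^2" "y^2", unfolded power_divide] unfolding ys2_def power_divide by blast
    then show False using ys_neg by (metis zero_le_power2 not_le)
  qed
  have cplx: "\<forall>x y :: complex.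
              (x^2 / (complex_of_real a)^2 + y^2 / (complex_of_real b)^2 = 1
               \<and> (complex_of_real a)^2 * x^2 / (complex_of_real (a^2 - c^2))^2
                 + (complex_of_real b)^2 * y^2 / (complex_of_real (b^2 - c^2))^2 = 1)
              \<longleftrightarrow> (x^2 = complex_of_real xs2 \<and> y^2 = complex_of_real ys2)"
  proof (intro allI)
    fix x y :: complex
    let ?A = "(complex_of_real a)^2"
    let ?B = "(complex_of_real b)^2"
    let ?C = "(complex_of_real c)^2"
    have cv: "\<And>r. complex_of_real r = 0 \<longleftrightarrow> r = 0" by simp
    have e1: "?A = complex_of_real A" "?B = complex_of_real B" "?C = complex_of_real C"
      unfolding A_def B_def C_def by simp_all
    have ne: "?A \<noteq> 0" "?B \<noteq> 0" "?C \<noteq> 0" "?A - ?B \<noteq> 0" "?A - ?C \<noteq> 0" "?B - ?C \<noteq> 0"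
        "2*?A*?B - ?A*?C - ?B*?C \<noteq> 0"
    proof -
      have r: "?A - ?B = complex_of_real (A-B)" "?A - ?C = complex_of_real (A-C)" "?B - ?C = complex_of_real (B-C)"
          "2*?A*?B - ?A*?C - ?B*?C = complex_of_real (2*A*B - A*C - B*C)" unfolding e1 by simp_all
      show "?A \<noteq> 0" "?B \<noteq> 0" "?C \<noteq> 0" "?A - ?B \<noteq> 0" "?A - ?C \<noteq> 0" "?B - ?C \<noteq> 0"
        "2*?A*?B - ?A*?C - ?B*?C \<noteq> 0"
        unfolding r unfolding e1 of_real_eq_0_iff using AB BC C0 k by simp_all
    qed
    have d: "complex_of_real (a^2 - c^2) = ?A - ?C" "complex_of_real (b^2 - c^2) = ?B - ?C" by simp_all
    have xs: "complex_of_real xs2 = ?A*(?A-?C)^2*(2*?B-?C)/((?A-?B)*(2*?A*?B - ?A*?C - ?B*?C))"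
      unfolding xs2_def by simp
    have ys: "complex_of_real ys2 = ?B*(?B-?C)^2*(2*?A-?C)/((?B-?A)*(2*?A*?B - ?A*?C - ?B*?C))"
    proof -
      have "2*a^2*b^2 - b^2*c^2 - a^2*c^2 = 2*a^2*b^2 - a^2*c^2 - b^2*c^2" by simp
      then show ?thesis unfolding ys2_def by simp
    qed
    show "(x^2 / (complex_of_real a)^2 + y^2 / (complex_of_real b)^2 = 1
               \<and> (complex_of_real a)^2 * x^2 / (complex_of_real (a^2 - c^2))^2
                 + (complex_of_real b)^2 * y^2 / (complex_of_real (b^2 - c^2))^2 = 1)
              \<longleftrightarrow> (x^2 = complex_of_real xs2 \<and> y^2 = complex_of_real ys2)"
      unfolding d xs ys by (rule EE_lin[OF ne])
  qed
  show ?thesis unfolding Let_def xs2_def[symmetric] ys2_def[symmetric] using empty cplx ys_neg by blast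
qed

lemma gx: "V \<noteq> 0 \<Longrightarrow> W \<noteq> 0 \<Longrightarrow> K \<noteq> 0 \<Longrightarrow>
   A^2*U/(V*W) - A*T1*T2/(V*K) = A*(A*U*K - T1*T2*W)/(V*W*K)" for A U V W T1 T2 K :: real
  by (simp add: field_simps power2_eq_square)
lemma gz: "V \<noteq> 0 \<Longrightarrow> W \<noteq> 0 \<Longrightarrow> K \<noteq> 0 \<Longrightarrow>
   C*T1*T2/(V*K) - C^2*U/(V*W) = C*(T1*T2*W - C*U*K)/(V*W*K)" for C U V W T1 T2 K :: real
  by (simp add: field_simps power2_eq_square)

lemma neg2: "x * (- y) / (v * (- k)) = x * y / (v * k)" for x y v k :: real
  by (simp only: mult_minus_right minus_divide_divide)
lemma neg2': "x / ((- v) * (- k)) = x / (v * k)" for x v k :: real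
  by (simp only: mult_minus_right mult_minus_left minus_minus)

lemma P5x: "A*(A-2*C)^3*(A*B+B*C-2*A*C) - (A-B)^2*(B-2*C)*(A+C)^3
   = (B*(A+C) - 3*A*C)^2*(2*A^2-A*B-2*A*C-B*C+2*C^2)" for A B C :: real
  by (simp add: algebra_simps power2_eq_square power3_eq_cube)
lemma P5z: "(B-C)^2*(2*A-B)*(A+C)^3 - C*(2*A-C)^3*(A*B+B*C-2*A*C)
   = (B*(A+C) - 3*A*C)^2*(2*A^2-A*B-2*A*C-B*C+2*C^2)" for A B C :: real
  by (simp add: algebra_simps power2_eq_square power3_eq_cube)
lemma P6y: "B*(B-2*C)^3*(A*B+A*C-2*B*C) - (A-B)^2*(A-2*C)*(B+C)^3
   = (2*B^2+2*C^2-A*B-A*C-2*B*C)*(A*(B+C) - 3*B*C)^2" for A B C :: real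
  by (simp add: algebra_simps power2_eq_square power3_eq_cube)
lemma P6z: "(A-C)^2*(2*B-A)*(B+C)^3 - C*(2*B-C)^3*(A*B+A*C-2*B*C)
   = (2*B^2+2*C^2-A*B-A*C-2*B*C)*(A*(B+C) - 3*B*C)^2" for A B C :: real
  by (simp add: algebra_simps power2_eq_square power3_eq_cube)

lemma part5:
  fixes a b c :: real
  assumes abc: "a > b" "b > c" "c > 0" "b^2 \<ge> 2*c^2"
  shows "(let x3 = sqrt (a^2*(a^2 - b^2)^2*(2*c^2 - b^2) / ((a^2 - c^2)*(2*a^2*c^2 - a^2*b^2 - b^2*c^2)));
           z3 = sqrt (c^2*(c^2 - b^2)^2*(2*a^2 - b^2) / ((c^2 - a^2)*(2*a^2*c^2 - a^2*b^2 - b^2*c^2)));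
           x1 = sqrt (a^4*(a^2 - 2*c^2)^3 / ((a^2 - c^2)*(a^2 + c^2)^3));
           z1 = sqrt (c^4*(2*a^2 - c^2)^3 / ((a^2 - c^2)*(a^2 + c^2)^3))
       in curve (ellipse2 a b c) \<inter> curve (ellipse8 a b c) = pm_xz x3 z3
          \<and> x1 \<ge> x3 \<and> z1 \<le> z3
          \<and> (1/a^2 + 1/c^2 = 3/b^2 \<longrightarrow> x1 = x3 \<and> z1 = z3))"
proof -
  define A where "A = a^2"
  define B where "B = b^2"
  define C where "C = c^2"
  have pos: "a > 0" "b > 0" using abc by auto
  have C0: "C > 0" unfolding C_def using abc by simp
  have BC: "B > C" unfolding B_def C_def using abc by (simp add: power_strict_mono)
  have AB: "A > B" unfolding A_def B_def using abc by (simp add: power_strict_mono)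
  have B2C: "B \<ge> 2*C" unfolding B_def C_def using abc by simp
  have a4: "a^4 = A^2" "c^4 = C^2" unfolding A_def C_def by simp_all
  define k where "k = A*B + B*C - 2*A*C"
  have k0: "k > 0"
  proof -
    have "A*B \<ge> A*(2*C)" using B2C AB C0 by simp
    moreover have "B*C > 0" using BC C0 by simp
    ultimately show ?thesis unfolding k_def by linarith
  qed
  have ne: "A \<noteq> 0" "B \<noteq> 0" "C \<noteq> 0" "A - C \<noteq> 0" "A \<noteq> C" "k \<noteq> 0" "A + C \<noteq> 0" "2*A*C - A*B - B*C \<noteq> 0"
    "C - A \<noteq> 0"
    using AB BC C0 k0 unfolding k_def by auto
  define X3 where "X3 = a^2*(a^2 - b^2)^2*(2*c^2 - b^2) / ((a^2 - c^2)*(2*a^2*c^2 - a^2*b^2 - b^2*c^2))"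
  define Z3 where "Z3 = c^2*(c^2 - b^2)^2*(2*a^2 - b^2) / ((c^2 - a^2)*(2*a^2*c^2 - a^2*b^2 - b^2*c^2))"
  define X1 where "X1 = a^4*(a^2 - 2*c^2)^3 / ((a^2 - c^2)*(a^2 + c^2)^3)"
  define Z1 where "Z1 = c^4*(2*a^2 - c^2)^3 / ((a^2 - c^2)*(a^2 + c^2)^3)"
  have f1: "2*c^2 - b^2 = -(B - 2*C)" "2*a^2*c^2 - a^2*b^2 - b^2*c^2 = -k" "c^2 - a^2 = -(A-C)"
    unfolding A_def B_def C_def k_def by (simp_all add: algebra_simps)
  have X3e: "X3 = A*(A-B)^2*(B-2*C)/((A-C)*k)"
  proof -
    have "X3 = A*(A-B)^2*(-(B-2*C))/((A-C)*(-k))"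
      unfolding X3_def f1 unfolding A_def B_def C_def ..
    then show ?thesis unfolding neg2 .
  qed
  have Z3e: "Z3 = C*(B-C)^2*(2*A-B)/((A-C)*k)"
  proof -
    have "Z3 = C*(C-B)^2*(2*A-B)/((-(A-C))*(-k))"
      unfolding Z3_def f1 unfolding A_def B_def C_def ..
    then show ?thesis unfolding neg2' power2_commute[of C B] .
  qed
  have X1e: "X1 = A^2*(A-2*C)^3/((A-C)*(A+C)^3)"
    unfolding X1_def a4 A_def[symmetric] B_def[symmetric] C_def[symmetric] ..
  have Z1e: "Z1 = C^2*(2*A-C)^3/((A-C)*(A+C)^3)"
    unfolding Z1_def a4 A_def[symmetric] B_def[symmetric] C_def[symmetric] ..
  have X3nn: "X3 \<ge> 0" unfolding X3e using AB BC C0 k0 B2C by simp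
  have Z3nn: "Z3 \<ge> 0" unfolding Z3e using AB BC C0 k0 by simp
  define d where "d = B*(A+C) - 3*A*C"
  define Q where "Q = 2*A^2-A*B-2*A*C-B*C+2*C^2"
  have Q0: "Q > 0"
  proof -
    have "B*(A+C) < A*(A+C)" using AB BC C0 by simp
    moreover have "(A-C)*(A-2*C) > 0" using AB B2C C0 by simp
    ultimately show ?thesis unfolding Q_def by (simp add: algebra_simps power2_eq_square)
  qed
  have dX: "X1 - X3 = A*d^2*Q/((A-C)*(A+C)^3*k)"
  proof -
    have "X1 - X3 = A*(A*(A-2*C)^3*k - (A-B)^2*(B-2*C)*(A+C)^3)/((A-C)*(A+C)^3*k)"
      unfolding X1e X3e using ne by (intro gx) auto
    also have "\<dots> = A*d^2*Q/((A-C)*(A+C)^3*k)" unfolding k_def d_def Q_def P5x by (simp add: mult.assoc)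
    finally show ?thesis .
  qed
  have dZ: "Z3 - Z1 = C*d^2*Q/((A-C)*(A+C)^3*k)"
  proof -
    have "Z3 - Z1 = C*((B-C)^2*(2*A-B)*(A+C)^3 - C*(2*A-C)^3*k)/((A-C)*(A+C)^3*k)"
      unfolding Z1e Z3e using ne by (intro gz) auto
    also have "\<dots> = C*d^2*Q/((A-C)*(A+C)^3*k)" unfolding k_def d_def Q_def P5z by (simp add: mult.assoc)
    finally show ?thesis .
  qed
  have ge: "X3 \<le> X1" "Z1 \<le> Z3"
  proof -
    have "A*d^2*Q/((A-C)*(A+C)^3*k) \<ge> 0" "C*d^2*Q/((A-C)*(A+C)^3*k) \<ge> 0"
      using AB BC C0 k0 Q0 by simp_all
    then show "X3 \<le> X1" "Z1 \<le> Z3" using dX dZ by linarith+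
  qed
  have eqc: "1/a^2 + 1/c^2 = 3/b^2 \<Longrightarrow> X1 = X3 \<and> Z1 = Z3"
  proof -
    assume h: "1/a^2 + 1/c^2 = 3/b^2"
    then have "d = 0" unfolding d_def A_def[symmetric] B_def[symmetric] C_def[symmetric] using ne
      by (simp add: field_simps)
    then show ?thesis using dX dZ by simp
  qed
  have inter: "curve (ellipse2 a b c) \<inter> curve (ellipse8 a b c) = pm_xz (sqrt X3) (sqrt Z3)"
    unfolding ell_fun
  proof (rule lift_xz)
    fix x y :: real
    have pp: "a > 0" "c > 0" "(a^2 - b^2)/a > 0" "(b^2 - c^2)/c > 0"
      using abc AB BC unfolding A_def B_def C_def by auto
    show "((\<exists>t\<in>{0..<2*pi}. x = a * cos t \<and> y = c * sin t) \<and>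
           (\<exists>t\<in>{0..<2*pi}. x = (a^2 - b^2)/a * cos t \<and> y = (b^2 - c^2)/c * sin t)) \<longleftrightarrow>
          ((x = sqrt X3 \<or> x = - sqrt X3) \<and> (y = sqrt Z3 \<or> y = - sqrt Z3))"
      unfolding L_ee[OF pp c5_lin[OF abc]] X3_def[symmetric] Z3_def[symmetric] sq_pm[OF X3nn] sq_pm[OF Z3nn] ..
  qed
  show ?thesis unfolding Let_def X3_def[symmetric] Z3_def[symmetric] X1_def[symmetric] Z1_def[symmetric]
    using inter ge eqc by simp
qed

lemma pmn: "p > 0 \<Longrightarrow> (0 \<le> p * S) = (0 \<le> S)" for p S :: real
  by (simp add: zero_le_mult_iff)

lemma part6:
  fixes a b c :: real
  assumes abc: "a > b" "b > c" "c > 0" "2*b^2 \<ge> a^2" "a^2 \<ge> 2*c^2"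
  shows "(let y4 = sqrt (b^2*(b^2 - a^2)^2*(2*c^2 - a^2) / ((b^2 - c^2)*(2*b^2*c^2 - a^2*b^2 - a^2*c^2)));
           z4 = sqrt (c^2*(c^2 - a^2)^2*(2*b^2 - a^2) / ((c^2 - b^2)*(2*b^2*c^2 - a^2*b^2 - a^2*c^2)));
           y2 = sqrt (b^4*(b^2 - 2*c^2)^3 / ((b^2 - c^2)*(b^2 + c^2)^3));
           z2 = sqrt (c^4*(2*b^2 - c^2)^3 / ((b^2 - c^2)*(b^2 + c^2)^3))
       in curve (ellipse3 a b c) \<inter> curve (ellipse9 a b c) = pm_yz y4 z4
          \<and> (b^2 \<ge> 2*c^2 \<longrightarrow>
               ((y2 \<ge> y4 \<and> z2 \<le> z4) \<longleftrightarrow>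
                2*b^4 + 2*c^4 - a^2*b^2 - a^2*c^2 - 2*b^2*c^2 \<ge> 0)))"
proof -
  define A where "A = a^2"
  define B where "B = b^2"
  define C where "C = c^2"
  have pos: "a > 0" "b > 0" using abc by auto
  have C0: "C > 0" unfolding C_def using abc by simp
  have BC: "B > C" unfolding B_def C_def using abc by (simp add: power_strict_mono)
  have AB: "A > B" unfolding A_def B_def using abc by (simp add: power_strict_mono)
  have A2C: "A \<ge> 2*C" "2*B \<ge> A" unfolding A_def B_def C_def using abc by simp_all
  have a4: "b^4 = B^2" "c^4 = C^2" unfolding B_def C_def by simp_all
  define k where "k = A*B + A*C - 2*B*C"
  have k0: "k > 0"
  proof -
    have "A*B > B*C" "A*C > B*C" using AB BC C0 by simp_all
    then show ?thesis unfolding k_def by linarith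
  qed
  have ne: "A \<noteq> 0" "B \<noteq> 0" "C \<noteq> 0" "B - C \<noteq> 0" "B \<noteq> C" "k \<noteq> 0" "B + C \<noteq> 0"
    using AB BC C0 k0 unfolding k_def by auto
  define Y4 where "Y4 = b^2*(b^2 - a^2)^2*(2*c^2 - a^2) / ((b^2 - c^2)*(2*b^2*c^2 - a^2*b^2 - a^2*c^2))"
  define Z4 where "Z4 = c^2*(c^2 - a^2)^2*(2*b^2 - a^2) / ((c^2 - b^2)*(2*b^2*c^2 - a^2*b^2 - a^2*c^2))"
  define Y2 where "Y2 = b^4*(b^2 - 2*c^2)^3 / ((b^2 - c^2)*(b^2 + c^2)^3)"
  define Z2 where "Z2 = c^4*(2*b^2 - c^2)^3 / ((b^2 - c^2)*(b^2 + c^2)^3)"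
  have f1: "2*c^2 - a^2 = -(A - 2*C)" "2*b^2*c^2 - a^2*b^2 - a^2*c^2 = -k" "c^2 - b^2 = -(B-C)"
    unfolding A_def B_def C_def k_def by (simp_all add: algebra_simps)
  have Y4e: "Y4 = B*(A-B)^2*(A-2*C)/((B-C)*k)"
  proof -
    have "Y4 = B*(B-A)^2*(-(A-2*C))/((B-C)*(-k))"
      unfolding Y4_def f1 unfolding A_def B_def C_def ..
    then show ?thesis unfolding neg2 power2_commute[of B A] .
  qed
  have Z4e: "Z4 = C*(A-C)^2*(2*B-A)/((B-C)*k)"
  proof -
    have "Z4 = C*(C-A)^2*(2*B-A)/((-(B-C))*(-k))"
      unfolding Z4_def f1 unfolding A_def B_def C_def ..
    then show ?thesis unfolding neg2' power2_commute[of C A] .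
  qed
  have Y2e: "Y2 = B^2*(B-2*C)^3/((B-C)*(B+C)^3)"
    unfolding Y2_def a4 A_def[symmetric] B_def[symmetric] C_def[symmetric] ..
  have Z2e: "Z2 = C^2*(2*B-C)^3/((B-C)*(B+C)^3)"
    unfolding Z2_def a4 A_def[symmetric] B_def[symmetric] C_def[symmetric] ..
  have Y4nn: "Y4 \<ge> 0" unfolding Y4e using AB BC C0 k0 A2C by simp
  have Z4nn: "Z4 \<ge> 0" unfolding Z4e using AB BC C0 k0 A2C by simp
  define e where "e = A*(B+C) - 3*B*C"
  define S where "S = 2*B^2+2*C^2-A*B-A*C-2*B*C"
  have dY: "Y2 - Y4 = B*e^2/((B-C)*(B+C)^3*k) * S"
  proof -
    have "Y2 - Y4 = B*(B*(B-2*C)^3*k - (A-B)^2*(A-2*C)*(B+C)^3)/((B-C)*(B+C)^3*k)"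
      unfolding Y2e Y4e using ne by (intro gx) auto
    also have "\<dots> = B*e^2/((B-C)*(B+C)^3*k) * S" unfolding k_def e_def S_def P6y by (simp add: field_simps)
    finally show ?thesis .
  qed
  have dZ: "Z4 - Z2 = C*e^2/((B-C)*(B+C)^3*k) * S"
  proof -
    have "Z4 - Z2 = C*((A-C)^2*(2*B-A)*(B+C)^3 - C*(2*B-C)^3*k)/((B-C)*(B+C)^3*k)"
      unfolding Z2e Z4e using ne by (intro gz) auto
    also have "\<dots> = C*e^2/((B-C)*(B+C)^3*k) * S" unfolding k_def e_def S_def P6z by (simp add: field_simps)
    finally show ?thesis .
  qed
  have iff: "B \<ge> 2*C \<Longrightarrow> ((sqrt Y2 \<ge> sqrt Y4 \<and> sqrt Z2 \<le> sqrt Z4) \<longleftrightarrow> 2*b^4 + 2*c^4 - a^2*b^2 - a^2*c^2 - 2*b^2*c^2 \<ge> 0)"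
  proof -
    assume B2C: "B \<ge> 2*C"
    have e0: "e > 0"
    proof -
      have "A*(B+C) > B*(B+C)" using AB BC C0 by simp
      moreover have "B*(B+C) \<ge> 3*B*C" using B2C BC C0
        by (simp add: algebra_simps power2_eq_square)
      ultimately show ?thesis unfolding e_def by linarith
    qed
    have p1: "B*e^2/((B-C)*(B+C)^3*k) > 0" "C*e^2/((B-C)*(B+C)^3*k) > 0" using e0 BC C0 k0 by simp_all
    have Se: "2*b^4 + 2*c^4 - a^2*b^2 - a^2*c^2 - 2*b^2*c^2 = S"
      unfolding S_def A_def B_def C_def by (simp add: power2_eq_square power4_eq_xxxx)
    have "(sqrt Y2 \<ge> sqrt Y4 \<and> sqrt Z2 \<le> sqrt Z4) \<longleftrightarrow> (Y2 - Y4 \<ge> 0 \<and> Z4 - Z2 \<ge> 0)" by simp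
    also have "\<dots> \<longleftrightarrow> S \<ge> 0" unfolding dY dZ pmn[OF p1(1)] pmn[OF p1(2)] by simp
    finally show ?thesis unfolding Se .
  qed
  have inter: "curve (ellipse3 a b c) \<inter> curve (ellipse9 a b c) = pm_yz (sqrt Y4) (sqrt Z4)"
    unfolding ell_fun
  proof (rule lift_yz)
    fix x y :: real
    have pp: "b > 0" "c > 0" "(a^2 - b^2)/b > 0" "(a^2 - c^2)/c > 0"
      using abc AB BC C0 unfolding A_def B_def C_def by auto
    show "((\<exists>t\<in>{0..<2*pi}. x = b * cos t \<and> y = c * sin t) \<and>
           (\<exists>t\<in>{0..<2*pi}. x = (a^2 - b^2)/b * cos t \<and> y = (a^2 - c^2)/c * sin t)) \<longleftrightarrow>
          ((x = sqrt Y4 \<or> x = - sqrt Y4) \<and> (y = sqrt Z4 \<or> y = - sqrt Z4))"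
      unfolding L_ee[OF pp c6_lin[OF abc(1-3) abc(5)]] Y4_def[symmetric] Z4_def[symmetric] sq_pm[OF Y4nn] sq_pm[OF Z4nn] ..
  qed
  show ?thesis unfolding Let_def Y4_def[symmetric] Z4_def[symmetric] Y2_def[symmetric] Z2_def[symmetric]
    using inter iff unfolding B_def C_def by simp
qed

theorem lemma3:
  fixes a b c :: real
  assumes "a > b" and "b > c" and "c > 0"
  shows
   \<comment> \<open>(1)\<close>
   "(a^2 \<ge> 2*b^2 \<longrightarrow>
      (let x0 = sqrt (a^4*(a^2 - 2*b^2)^3 / ((a^2 - b^2)*(a^2 + b^2)^3));
           y0 = sqrt (b^4*(2*a^2 - b^2)^3 / ((a^2 - b^2)*(a^2 + b^2)^3))
       in curve (ellipse1 a b c) \<inter> curve (astroida4 a b c) = pm_xy x0 y0))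
  \<and> \<comment> \<open>(2)\<close>
    (a^2 \<ge> 2*c^2 \<longrightarrow>
      (let x1 = sqrt (a^4*(a^2 - 2*c^2)^3 / ((a^2 - c^2)*(a^2 + c^2)^3));
           z1 = sqrt (c^4*(2*a^2 - c^2)^3 / ((a^2 - c^2)*(a^2 + c^2)^3))
       in curve (ellipse2 a b c) \<inter> curve (astroida5 a b c) = pm_xz x1 z1))
  \<and> \<comment> \<open>(3)\<close>
    (b^2 \<ge> 2*c^2 \<longrightarrow>
      (let y2 = sqrt (b^4*(b^2 - 2*c^2)^3 / ((b^2 - c^2)*(b^2 + c^2)^3));
           z2 = sqrt (c^4*(2*b^2 - c^2)^3 / ((b^2 - c^2)*(b^2 + c^2)^3))
       in curve (ellipse3 a b c) \<inter> curve (astroida6 a b c) = pm_yz y2 z2))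
  \<and> \<comment> \<open>(4)\<close>
    (let xs2 = a^2*(a^2 - c^2)^2*(2*b^2 - c^2) / ((a^2 - b^2)*(2*a^2*b^2 - a^2*c^2 - b^2*c^2));
         ys2 = b^2*(b^2 - c^2)^2*(2*a^2 - c^2) / ((b^2 - a^2)*(2*a^2*b^2 - b^2*c^2 - a^2*c^2))
     in curve (ellipse1 a b c) \<inter> curve (ellipse7 a b c) = {}
        \<and> (\<forall>x y :: complex.
              (x^2 / (complex_of_real a)^2 + y^2 / (complex_of_real b)^2 = 1
               \<and> (complex_of_real a)^2 * x^2 / (complex_of_real (a^2 - c^2))^2
                 + (complex_of_real b)^2 * y^2 / (complex_of_real (b^2 - c^2))^2 = 1)
              \<longleftrightarrow> (x^2 = complex_of_real xs2 \<and> y^2 = complex_of_real ys2))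
        \<and> ys2 < 0)
  \<and> \<comment> \<open>(5)\<close>
    (b^2 \<ge> 2*c^2 \<longrightarrow>
      (let x3 = sqrt (a^2*(a^2 - b^2)^2*(2*c^2 - b^2) / ((a^2 - c^2)*(2*a^2*c^2 - a^2*b^2 - b^2*c^2)));
           z3 = sqrt (c^2*(c^2 - b^2)^2*(2*a^2 - b^2) / ((c^2 - a^2)*(2*a^2*c^2 - a^2*b^2 - b^2*c^2)));
           x1 = sqrt (a^4*(a^2 - 2*c^2)^3 / ((a^2 - c^2)*(a^2 + c^2)^3));
           z1 = sqrt (c^4*(2*a^2 - c^2)^3 / ((a^2 - c^2)*(a^2 + c^2)^3))
       in curve (ellipse2 a b c) \<inter> curve (ellipse8 a b c) = pm_xz x3 z3
          \<and> x1 \<ge> x3 \<and> z1 \<le> z3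
          \<and> (1/a^2 + 1/c^2 = 3/b^2 \<longrightarrow> x1 = x3 \<and> z1 = z3)))
  \<and> \<comment> \<open>(6)\<close>
    (2*b^2 \<ge> a^2 \<and> a^2 \<ge> 2*c^2 \<longrightarrow>
      (let y4 = sqrt (b^2*(b^2 - a^2)^2*(2*c^2 - a^2) / ((b^2 - c^2)*(2*b^2*c^2 - a^2*b^2 - a^2*c^2)));
           z4 = sqrt (c^2*(c^2 - a^2)^2*(2*b^2 - a^2) / ((c^2 - b^2)*(2*b^2*c^2 - a^2*b^2 - a^2*c^2)));
           y2 = sqrt (b^4*(b^2 - 2*c^2)^3 / ((b^2 - c^2)*(b^2 + c^2)^3));
           z2 = sqrt (c^4*(2*b^2 - c^2)^3 / ((b^2 - c^2)*(b^2 + c^2)^3))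
       in curve (ellipse3 a b c) \<inter> curve (ellipse9 a b c) = pm_yz y4 z4
          \<and> (b^2 \<ge> 2*c^2 \<longrightarrow>
               ((y2 \<ge> y4 \<and> z2 \<le> z4) \<longleftrightarrow>
                2*b^4 + 2*c^4 - a^2*b^2 - a^2*c^2 - 2*b^2*c^2 \<ge> 0))))
  \<and> \<comment> \<open>(7)\<close>
    (a^2 + c^2 \<ge> 2*b^2 \<longrightarrow>
      (let x5 = sqrt ((a^2 - c^2)^3*(2*b^2 - a^2 - c^2)^3 / (a^2*(b^2 - a^2)*(a^2 + b^2 - 2*c^2)^3));
           y5 = sqrt ((b^2 - c^2)^3*(2*a^2 - b^2 - c^2)^3 / (b^2*(a^2 - b^2)*(a^2 + b^2 - 2*c^2)^3))
       in curve (astroida4 a b c) \<inter> curve (ellipse7 a b c) = pm_xy x5 y5))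
  \<and> \<comment> \<open>(8)\<close>
    (let x6 = sqrt ((a^2 - b^2)^3 / (a^2*(a^2 - c^2)));
         z6 = sqrt ((b^2 - c^2)^3 / (c^2*(a^2 - c^2)))
     in curve (astroida5 a b c) \<inter> curve (ellipse8 a b c) = pm_xz x6 z6
        \<and> (\<forall>p \<in> pm_xz x6 z6. tangent_at (astroida5 a b c) (ellipse8 a b c) p)
        \<and> (({p \<in> curve (astroida5 a b c). \<bar>fst p\<bar> > x6} \<subseteq> caustic_sheet1 a b c
             \<and> {p \<in> curve (astroida5 a b c). \<bar>fst p\<bar> < x6} \<subseteq> caustic_sheet2 a b c)
           \<or> ({p \<in> curve (astroida5 a b c). \<bar>fst p\<bar> > x6} \<subseteq> caustic_sheet2 a b c
             \<and> {p \<in> curve (astroida5 a b c). \<bar>fst p\<bar> < x6} \<subseteq> caustic_sheet1 a b c))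
        \<and> (({p \<in> curve (ellipse8 a b c). \<bar>fst p\<bar> > x6} \<subseteq> caustic_sheet1 a b c
             \<and> {p \<in> curve (ellipse8 a b c). \<bar>fst p\<bar> < x6} \<subseteq> caustic_sheet2 a b c)
           \<or> ({p \<in> curve (ellipse8 a b c). \<bar>fst p\<bar> > x6} \<subseteq> caustic_sheet2 a b c
             \<and> {p \<in> curve (ellipse8 a b c). \<bar>fst p\<bar> < x6} \<subseteq> caustic_sheet1 a b c))
        \<and> (\<forall>p \<in> pm_xz x6 z6.
              (ellq a b c p = 1 \<longleftrightarrow> 1/a^2 + 1/c^2 = 3/b^2)
            \<and> (ellq a b c p < 1 \<longleftrightarrow> 1/a^2 + 1/c^2 < 3/b^2)
            \<and> (ellq a b c p > 1 \<longleftrightarrow> 1/a^2 + 1/c^2 > 3/b^2)))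
  \<and> \<comment> \<open>(9)\<close>
    (a^2 + c^2 \<le> 2*b^2 \<longrightarrow>
      (let y7 = sqrt ((b^2 - a^2)^3*(2*c^2 - b^2 - a^2)^3 / (b^2*(c^2 - b^2)*(b^2 + c^2 - 2*a^2)^3));
           z7 = sqrt ((c^2 - a^2)^3*(2*b^2 - c^2 - a^2)^3 / (c^2*(b^2 - c^2)*(b^2 + c^2 - 2*a^2)^3))
       in curve (astroida6 a b c) \<inter> curve (ellipse9 a b c) = pm_yz y7 z7
          \<and> (\<forall>p \<in> pm_yz y7 z7.
                (ellq a b c p = 1 \<longleftrightarrow> 2*b^4 + 2*c^4 - a^2*b^2 - a^2*c^2 - 2*b^2*c^2 = 0)
              \<and> (ellq a b c p < 1 \<longleftrightarrow> 2*b^4 + 2*c^4 - a^2*b^2 - a^2*c^2 - 2*b^2*c^2 < 0)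
              \<and> (ellq a b c p > 1 \<longleftrightarrow> 2*b^4 + 2*c^4 - a^2*b^2 - a^2*c^2 - 2*b^2*c^2 > 0))))"
proof -
  have pos: "a > 0" "b > 0" using assms by auto
  have ac: "a > c" using assms by simp
  have p1: "a^2 \<ge> 2*b^2 \<longrightarrow> curve (ellipse1 a b c) \<inter> curve (astroida4 a b c) =
      pm_xy (sqrt (a^4*(a^2 - 2*b^2)^3 / ((a^2 - b^2)*(a^2 + b^2)^3))) (sqrt (b^4*(2*a^2 - b^2)^3 / ((a^2 - b^2)*(a^2 + b^2)^3)))"
  proof
    assume h: "a^2 \<ge> 2*b^2"
    show "curve (ellipse1 a b c) \<inter> curve (astroida4 a b c) =
      pm_xy (sqrt (a^4*(a^2 - 2*b^2)^3 / ((a^2 - b^2)*(a^2 + b^2)^3))) (sqrt (b^4*(2*a^2 - b^2)^3 / ((a^2 - b^2)*(a^2 + b^2)^3)))"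
      unfolding ell_fun by (rule lift_xy) (rule c123[OF assms(1) pos(2) h])
  qed
  have p2: "a^2 \<ge> 2*c^2 \<longrightarrow> curve (ellipse2 a b c) \<inter> curve (astroida5 a b c) =
      pm_xz (sqrt (a^4*(a^2 - 2*c^2)^3 / ((a^2 - c^2)*(a^2 + c^2)^3))) (sqrt (c^4*(2*a^2 - c^2)^3 / ((a^2 - c^2)*(a^2 + c^2)^3)))"
  proof
    assume h: "a^2 \<ge> 2*c^2"
    show "curve (ellipse2 a b c) \<inter> curve (astroida5 a b c) =
      pm_xz (sqrt (a^4*(a^2 - 2*c^2)^3 / ((a^2 - c^2)*(a^2 + c^2)^3))) (sqrt (c^4*(2*a^2 - c^2)^3 / ((a^2 - c^2)*(a^2 + c^2)^3)))"
      unfolding ell_fun by (rule lift_xz) (rule c123[OF ac assms(3) h])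
  qed
  have p3: "b^2 \<ge> 2*c^2 \<longrightarrow> curve (ellipse3 a b c) \<inter> curve (astroida6 a b c) =
      pm_yz (sqrt (b^4*(b^2 - 2*c^2)^3 / ((b^2 - c^2)*(b^2 + c^2)^3))) (sqrt (c^4*(2*b^2 - c^2)^3 / ((b^2 - c^2)*(b^2 + c^2)^3)))"
  proof
    assume h: "b^2 \<ge> 2*c^2"
    show "curve (ellipse3 a b c) \<inter> curve (astroida6 a b c) =
      pm_yz (sqrt (b^4*(b^2 - 2*c^2)^3 / ((b^2 - c^2)*(b^2 + c^2)^3))) (sqrt (c^4*(2*b^2 - c^2)^3 / ((b^2 - c^2)*(b^2 + c^2)^3)))"
      unfolding ell_fun by (rule lift_yz) (rule c123[OF assms(2) assms(3) h])
  qed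
  have p7: "a^2 + c^2 \<ge> 2*b^2 \<longrightarrow> curve (astroida4 a b c) \<inter> curve (ellipse7 a b c) =
      pm_xy (sqrt ((a^2 - c^2)^3*(2*b^2 - a^2 - c^2)^3 / (a^2*(b^2 - a^2)*(a^2 + b^2 - 2*c^2)^3)))
            (sqrt ((b^2 - c^2)^3*(2*a^2 - b^2 - c^2)^3 / (b^2*(a^2 - b^2)*(a^2 + b^2 - 2*c^2)^3)))"
  proof
    assume h: "a^2 + c^2 \<ge> 2*b^2"
    show "curve (astroida4 a b c) \<inter> curve (ellipse7 a b c) =
      pm_xy (sqrt ((a^2 - c^2)^3*(2*b^2 - a^2 - c^2)^3 / (a^2*(b^2 - a^2)*(a^2 + b^2 - 2*c^2)^3)))
            (sqrt ((b^2 - c^2)^3*(2*a^2 - b^2 - c^2)^3 / (b^2*(a^2 - b^2)*(a^2 + b^2 - 2*c^2)^3)))"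
      unfolding ell_fun by (rule lift_xy) (subst conj_commute, rule c7[OF assms h])
  qed
  let ?x6 = "sqrt ((a^2 - b^2)^3 / (a^2*(a^2 - c^2)))"
  let ?z6 = "sqrt ((b^2 - c^2)^3 / (c^2*(a^2 - c^2)))"
  have p8i: "curve (astroida5 a b c) \<inter> curve (ellipse8 a b c) = pm_xz ?x6 ?z6"
    unfolding ell_fun by (rule lift_xz) (subst conj_commute, rule c8[OF assms])
  have p8t: "\<forall>p \<in> pm_xz ?x6 ?z6. tangent_at (astroida5 a b c) (ellipse8 a b c) p"
    using tangency8[OF assms] by blast
  note sh = sheets8[OF assms]
  have p8e: "\<forall>p \<in> pm_xz ?x6 ?z6.
              (ellq a b c p = 1 \<longleftrightarrow> 1/a^2 + 1/c^2 = 3/b^2)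
            \<and> (ellq a b c p < 1 \<longleftrightarrow> 1/a^2 + 1/c^2 < 3/b^2)
            \<and> (ellq a b c p > 1 \<longleftrightarrow> 1/a^2 + 1/c^2 > 3/b^2)"
    using ellq8[OF assms] by blast
  have p9: "a^2 + c^2 \<le> 2*b^2 \<longrightarrow> curve (astroida6 a b c) \<inter> curve (ellipse9 a b c) =
      pm_yz (sqrt ((b^2 - a^2)^3*(2*c^2 - b^2 - a^2)^3 / (b^2*(c^2 - b^2)*(b^2 + c^2 - 2*a^2)^3)))
            (sqrt ((c^2 - a^2)^3*(2*b^2 - c^2 - a^2)^3 / (c^2*(b^2 - c^2)*(b^2 + c^2 - 2*a^2)^3)))
      \<and> (\<forall>p \<in> pm_yz (sqrt ((b^2 - a^2)^3*(2*c^2 - b^2 - a^2)^3 / (b^2*(c^2 - b^2)*(b^2 + c^2 - 2*a^2)^3)))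
            (sqrt ((c^2 - a^2)^3*(2*b^2 - c^2 - a^2)^3 / (c^2*(b^2 - c^2)*(b^2 + c^2 - 2*a^2)^3))).
                (ellq a b c p = 1 \<longleftrightarrow> 2*b^4 + 2*c^4 - a^2*b^2 - a^2*c^2 - 2*b^2*c^2 = 0)
              \<and> (ellq a b c p < 1 \<longleftrightarrow> 2*b^4 + 2*c^4 - a^2*b^2 - a^2*c^2 - 2*b^2*c^2 < 0)
              \<and> (ellq a b c p > 1 \<longleftrightarrow> 2*b^4 + 2*c^4 - a^2*b^2 - a^2*c^2 - 2*b^2*c^2 > 0))"
  proof
    assume h: "a^2 + c^2 \<le> 2*b^2"
    have i: "curve (astroida6 a b c) \<inter> curve (ellipse9 a b c) =
      pm_yz (sqrt ((b^2 - a^2)^3*(2*c^2 - b^2 - a^2)^3 / (b^2*(c^2 - b^2)*(b^2 + c^2 - 2*a^2)^3)))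
            (sqrt ((c^2 - a^2)^3*(2*b^2 - c^2 - a^2)^3 / (c^2*(b^2 - c^2)*(b^2 + c^2 - 2*a^2)^3)))"
      unfolding ell_fun by (rule lift_yz) (subst conj_commute, rule c9[OF assms h])
    then show "curve (astroida6 a b c) \<inter> curve (ellipse9 a b c) =
      pm_yz (sqrt ((b^2 - a^2)^3*(2*c^2 - b^2 - a^2)^3 / (b^2*(c^2 - b^2)*(b^2 + c^2 - 2*a^2)^3)))
            (sqrt ((c^2 - a^2)^3*(2*b^2 - c^2 - a^2)^3 / (c^2*(b^2 - c^2)*(b^2 + c^2 - 2*a^2)^3)))
      \<and> (\<forall>p \<in> pm_yz (sqrt ((b^2 - a^2)^3*(2*c^2 - b^2 - a^2)^3 / (b^2*(c^2 - b^2)*(b^2 + c^2 - 2*a^2)^3)))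
            (sqrt ((c^2 - a^2)^3*(2*b^2 - c^2 - a^2)^3 / (c^2*(b^2 - c^2)*(b^2 + c^2 - 2*a^2)^3))).
                (ellq a b c p = 1 \<longleftrightarrow> 2*b^4 + 2*c^4 - a^2*b^2 - a^2*c^2 - 2*b^2*c^2 = 0)
              \<and> (ellq a b c p < 1 \<longleftrightarrow> 2*b^4 + 2*c^4 - a^2*b^2 - a^2*c^2 - 2*b^2*c^2 < 0)
              \<and> (ellq a b c p > 1 \<longleftrightarrow> 2*b^4 + 2*c^4 - a^2*b^2 - a^2*c^2 - 2*b^2*c^2 > 0))"
      using ellq9[OF assms h] by blast
  qed
  note p4 = part4[OF assms, unfolded Let_def]
  note p5 = part5[OF assms, unfolded Let_def]
  note p6 = part6[OF assms, unfolded Let_def]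
  show ?thesis unfolding Let_def
    using p1 p2 p3 p4 p5 p6 p7 p8i p8t sh p8e p9 by blast
qed

end
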